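(* Let $H$ be a complex Hilbert space, $A\in B(H)$ a nonzero positive semidefinite operator, and $T\in B_{A^{1/2}}(H)$. Let $T_b$ be the operator on $\mathbf{R}(A^{1/2})$ given by $T_b(A^{1/2}x)=A^{1/2}Tx$, $x\in H$. Then $$\|T_b\|_{\mathbf{R}(A^{1/2})}=\|(T^{\diamond})^{\diamond}\|=\|T^{\diamond}\|_A,$$ where $\|(T^\diamond)^\diamond\|$ is the usual operator norm on $H$.
   Context: $\|x\|_A=\langle Ax,x\rangle^{1/2}$. For $S\in B(H)$, $\|S\|_A=\sup\{\|Sx\|_A : x\in\overline{R(A)},\ \|x\|_A=1\}$. $B_{A^{1/2}}(H)=\{S\in B(H): R(S^*A^{1/2})\subset R(A^{1/2})\}$. For $S\in B_{A^{1/2}}(H)$, $S^{\diamond}$ is the unique operator in $B(H)$ with $S^*A^{1/2}=A^{1/2}S^{\diamond}$ and $R(S^{\diamond})\subset\overline{R(A^{1/2})}$; $S^\diamond\in B_{A^{1/2}}(H)$. $P$ is the orthogonal projection onto $\overline{R(A)}$, and $\mathbf{R}(A^{1/2})$ is the Hilbert space $R(A^{1/2})$ with inner product $(A^{1/2}x,A^{1/2}y)=\langle Px,Py\rangle$. *)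

theory Defs
  imports "HOL-Analysis.Analysis"
begin

class complex_vector = real_vector +
  fixes scaleC :: "complex \<Rightarrow> 'a \<Rightarrow> 'a"
  assumes scaleC_add_right: "scaleC a (x + y) = scaleC a x + scaleC a y"
    and scaleC_add_left: "scaleC (a + b) x = scaleC a x + scaleC b x"
    and scaleC_scaleC: "scaleC a (scaleC b x) = scaleC (a * b) x"
    and scaleC_one: "scaleC 1 x = x"
    and scaleR_scaleC: "scaleR r x = scaleC (complex_of_real r) x"

class chilbert_space = complex_vector + banach +
  fixes cinner :: "'a \<Rightarrow> 'a \<Rightarrow> complex"
  assumes cinner_cnj: "cinner x y = cnj (cinner y x)"
    and cinner_add_left: "cinner (x + y) z = cinner x z + cinner y z"
    and cinner_scaleC_left: "cinner (scaleC c x) y = c * cinner x y"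
    and cinner_self_norm: "cinner x x = complex_of_real ((norm x)\<^sup>2)"

text \<open>Non-vacuity: the complex numbers form a complex Hilbert space.\<close>
instantiation complex :: complex_vector
begin
definition scaleC_complex :: "complex \<Rightarrow> complex \<Rightarrow> complex" where
  "scaleC_complex a x = a * x"
instance proof
  fix a b x y :: complex and r :: real
  show "scaleC a (x + y) = scaleC a x + scaleC a y" by (simp add: scaleC_complex_def distrib_left)
  show "scaleC (a + b) x = scaleC a x + scaleC b x" by (simp add: scaleC_complex_def distrib_right)
  show "scaleC a (scaleC b x) = scaleC (a * b) x" by (simp add: scaleC_complex_def mult.assoc)
  show "scaleC 1 x = x" by (simp add: scaleC_complex_def)
  show "scaleR r x = scaleC (complex_of_real r) x" by (simp add: scaleC_complex_def scaleR_conv_of_real)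
qed
end
instantiation complex :: chilbert_space
begin
definition cinner_complex :: "complex \<Rightarrow> complex \<Rightarrow> complex" where
  "cinner_complex x y = x * cnj y"
instance proof
  fix c x y z :: complex
  show "cinner x y = cnj (cinner y x)" by (simp add: cinner_complex_def mult.commute)
  show "cinner (x + y) z = cinner x z + cinner y z" by (simp add: cinner_complex_def distrib_right)
  show "cinner (scaleC c x) y = c * cinner x y" by (simp add: cinner_complex_def scaleC_complex_def mult.assoc)
  show "cinner x x = complex_of_real ((norm x)\<^sup>2)" by (simp only: cinner_complex_def complex_norm_square)
qed
end

definition cblinear :: "('a::chilbert_space \<Rightarrow> 'a) \<Rightarrow> bool" where
  "cblinear f \<longleftrightarrow> bounded_linear f \<and> (\<forall>c x. f (scaleC c x) = scaleC c (f x))"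

definition positive_op :: "('a::chilbert_space \<Rightarrow> 'a) \<Rightarrow> bool" where
  "positive_op A \<longleftrightarrow> cblinear A \<and> (\<forall>x. Im (cinner (A x) x) = 0 \<and> Re (cinner (A x) x) \<ge> 0)"

definition adjoint :: "('a::chilbert_space \<Rightarrow> 'a) \<Rightarrow> ('a \<Rightarrow> 'a)" where
  "adjoint S = (THE S'. cblinear S' \<and> (\<forall>x y. cinner (S x) y = cinner x (S' y)))"

definition op_sqrt :: "('a::chilbert_space \<Rightarrow> 'a) \<Rightarrow> ('a \<Rightarrow> 'a)" where
  "op_sqrt A = (THE B. positive_op B \<and> B \<circ> B = A)"

definition orth_proj :: "'a::chilbert_space set \<Rightarrow> 'a \<Rightarrow> 'a" where
  "orth_proj M x = (THE p. p \<in> M \<and> (\<forall>z\<in>M. cinner (x - p) z = 0))"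

definition projP :: "('a::chilbert_space \<Rightarrow> 'a) \<Rightarrow> 'a \<Rightarrow> 'a" where
  "projP A = orth_proj (closure (range A))"

definition A_norm :: "('a::chilbert_space \<Rightarrow> 'a) \<Rightarrow> 'a \<Rightarrow> real" where
  "A_norm A x = sqrt (Re (cinner (A x) x))"

definition A_opnorm :: "('a::chilbert_space \<Rightarrow> 'a) \<Rightarrow> ('a \<Rightarrow> 'a) \<Rightarrow> real" where
  "A_opnorm A S = (SUP x \<in> {x \<in> closure (range A). A_norm A x = 1}. A_norm A (S x))"

definition BA_half :: "('a::chilbert_space \<Rightarrow> 'a) \<Rightarrow> ('a \<Rightarrow> 'a) set" where
  "BA_half A = {S. cblinear S \<and> range (adjoint S \<circ> op_sqrt A) \<subseteq> range (op_sqrt A)}"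

definition diamond :: "('a::chilbert_space \<Rightarrow> 'a) \<Rightarrow> ('a \<Rightarrow> 'a) \<Rightarrow> ('a \<Rightarrow> 'a)" where
  "diamond A S = (THE D. cblinear D \<and> adjoint S \<circ> op_sqrt A = op_sqrt A \<circ> D
                         \<and> range D \<subseteq> closure (range (op_sqrt A)))"

text \<open>Norm of y = A^{1/2}x in bold R(A^{1/2}) is \<parallel>Px\<parallel> (from (A^{1/2}x, A^{1/2}y) = \<langle>Px,Py\<rangle>).\<close>
definition RA_norm :: "('a::chilbert_space \<Rightarrow> 'a) \<Rightarrow> 'a \<Rightarrow> real" where
  "RA_norm A y = norm (projP A (SOME x. op_sqrt A x = y))"

definition T_b :: "('a::chilbert_space \<Rightarrow> 'a) \<Rightarrow> ('a \<Rightarrow> 'a) \<Rightarrow> 'a \<Rightarrow> 'a" where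
  "T_b A T y = op_sqrt A (T (SOME x. op_sqrt A x = y))"

definition RA_opnorm_set :: "('a::chilbert_space \<Rightarrow> 'a) \<Rightarrow> ('a \<Rightarrow> 'a) \<Rightarrow> real set" where
  "RA_opnorm_set A U = (\<lambda>y. RA_norm A (U y)) ` {y \<in> range (op_sqrt A). RA_norm A y = 1}"

definition RA_opnorm :: "('a::chilbert_space \<Rightarrow> 'a) \<Rightarrow> ('a \<Rightarrow> 'a) \<Rightarrow> real" where
  "RA_opnorm A U = Sup (RA_opnorm_set A U)"

end

theory Submission
  imports Defs "HOL-Computational_Algebra.Formal_Power_Series"
begin

section \<open>Basic algebra of complex Hilbert spaces\<close>


lemma scaleC_zero_left [simp]: "scaleC 0 (x::'a::chilbert_space) = 0"
proof -
  have "scaleC (0+0) x = scaleC 0 x + scaleC 0 x" by (rule scaleC_add_left)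
  then show ?thesis by simp
qed

lemma scaleC_of_real: "scaleC (complex_of_real r) (x::'a::chilbert_space) = scaleR r x"
  by (simp add: scaleR_scaleC)

lemma scaleC_zero_right [simp]: "scaleC c (0::'a::chilbert_space) = 0"
proof -
  have "scaleC c (0+0::'a) = scaleC c 0 + scaleC c 0" by (rule scaleC_add_right)
  then show ?thesis by simp
qed

lemma scaleC_minus_right: "scaleC c (- x::'a::chilbert_space) = - scaleC c x"
proof -
  have "scaleC c (x + - x) = scaleC c x + scaleC c (-x)" by (rule scaleC_add_right)
  then have "scaleC c x + scaleC c (-x) = 0" by simp
  then show ?thesis by (metis minus_unique)
qed

lemma scaleC_diff_right: "scaleC c (x - y::'a::chilbert_space) = scaleC c x - scaleC c y"
  by (simp only: diff_conv_add_uminus scaleC_add_right scaleC_minus_right)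

lemma scaleC_minus_left: "scaleC (- c) (x::'a::chilbert_space) = - scaleC c x"
proof -
  have "scaleC (c + - c) x = scaleC c x + scaleC (-c) x" by (rule scaleC_add_left)
  then have "scaleC c x + scaleC (-c) x = 0" by simp
  then show ?thesis by (metis minus_unique)
qed

lemma scaleC_diff_left: "scaleC (a - b) (x::'a::chilbert_space) = scaleC a x - scaleC b x"
  by (simp only: diff_conv_add_uminus scaleC_add_left scaleC_minus_left)

lemma scaleC_scaleR_commute: "scaleC c (scaleR r x) = scaleR r (scaleC c (x::'a::chilbert_space))"
  by (simp add: scaleR_scaleC scaleC_scaleC mult.commute)

lemma cinner_zero_left [simp]: "cinner 0 (y::'a::chilbert_space) = 0"
proof -
  have "cinner (0+0) y = cinner 0 y + cinner 0 y" by (rule cinner_add_left)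
  then show ?thesis by simp
qed

lemma cinner_zero_right [simp]: "cinner (x::'a::chilbert_space) 0 = 0"
  by (subst cinner_cnj) simp

lemma cinner_add_right: "cinner (x::'a::chilbert_space) (y + z) = cinner x y + cinner x z"
  by (subst (1 2 3) cinner_cnj) (simp add: cinner_add_left)

lemma cinner_scaleC_right: "cinner (x::'a::chilbert_space) (scaleC c y) = cnj c * cinner x y"
  by (subst (1 2) cinner_cnj) (simp add: cinner_scaleC_left)

lemma cinner_minus_left: "cinner (- x::'a::chilbert_space) y = - cinner x y"
proof -
  have "cinner (x + - x) y = cinner x y + cinner (-x) y" by (rule cinner_add_left)
  then have "cinner x y + cinner (-x) y = 0" by simp
  then show ?thesis by (metis minus_unique)
qed

lemma cinner_minus_right: "cinner (x::'a::chilbert_space) (- y) = - cinner x y"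
  by (subst (1 2) cinner_cnj) (simp add: cinner_minus_left)

lemma cinner_diff_left: "cinner (x - y::'a::chilbert_space) z = cinner x z - cinner y z"
  by (simp only: diff_conv_add_uminus cinner_add_left cinner_minus_left)

lemma cinner_diff_right: "cinner (x::'a::chilbert_space) (y - z) = cinner x y - cinner x z"
  by (simp only: diff_conv_add_uminus cinner_add_right cinner_minus_right)

lemma cinner_scaleR_left: "cinner (scaleR r x::'a::chilbert_space) y = of_real r * cinner x y"
  by (simp add: scaleR_scaleC cinner_scaleC_left)

lemma cinner_scaleR_right: "cinner (x::'a::chilbert_space) (scaleR r y) = of_real r * cinner x y"
  by (simp add: scaleR_scaleC cinner_scaleC_right)

lemma cinner_sum_left: "cinner (sum f S::'a::chilbert_space) y = (\<Sum>i\<in>S. cinner (f i) y)"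
  by (induction S rule: infinite_finite_induct) (auto simp: cinner_add_left)

lemmas cinner_simps = cinner_add_left cinner_add_right cinner_diff_left cinner_diff_right
  cinner_minus_left cinner_minus_right cinner_scaleC_left cinner_scaleC_right
  cinner_scaleR_left cinner_scaleR_right

lemma cinner_self: "cinner (x::'a::chilbert_space) x = complex_of_real ((norm x)\<^sup>2)"
  by (rule cinner_self_norm)

lemma Re_cinner_self: "Re (cinner (x::'a::chilbert_space) x) = (norm x)\<^sup>2"
  by (simp add: cinner_self)

lemma Im_cinner_self [simp]: "Im (cinner (x::'a::chilbert_space) x) = 0"
  by (simp add: cinner_self)

lemma cinner_self_eq_0: "cinner (x::'a::chilbert_space) x = 0 \<longleftrightarrow> x = 0"
  by (simp add: cinner_self)

lemma cmod_cinner_self: "cmod (cinner (x::'a::chilbert_space) x) = (norm x)\<^sup>2"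
  by (simp only: cinner_self norm_of_real) simp

lemma norm_scaleC: "norm (scaleC c (x::'a::chilbert_space)) = cmod c * norm x"
proof -
  have "complex_of_real ((norm (scaleC c x))\<^sup>2) = cinner (scaleC c x) (scaleC c x)"
    by (simp add: cinner_self)
  also have "\<dots> = (c * cnj c) * cinner x x"
    by (simp add: cinner_scaleC_left cinner_scaleC_right)
  also have "\<dots> = complex_of_real ((cmod c)\<^sup>2) * complex_of_real ((norm x)\<^sup>2)"
    by (simp only: cinner_self complex_norm_square)
  also have "\<dots> = complex_of_real ((cmod c * norm x)\<^sup>2)"
    by (simp only: of_real_mult power_mult_distrib)
  finally have "(norm (scaleC c x))\<^sup>2 = (cmod c * norm x)\<^sup>2"
    using of_real_eq_iff by blast
  then show ?thesis
    by (simp add: power2_eq_iff_nonneg)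
qed

lemma cinner_ext: "(\<And>y. cinner (x::'a::chilbert_space) y = cinner z y) \<Longrightarrow> x = z"
proof -
  assume h: "\<And>y. cinner x y = cinner z y"
  have "cinner (x - z) (x - z) = 0" by (simp add: cinner_diff_left h)
  then show ?thesis by (simp add: cinner_self_eq_0)
qed

lemma cinner_ext_right: "(\<And>y. cinner y (x::'a::chilbert_space) = cinner y z) \<Longrightarrow> x = z"
proof -
  assume h: "\<And>y. cinner y x = cinner y z"
  have "cinner (x - z) (x - z) = 0" by (simp add: cinner_diff_right h)
  then show ?thesis by (simp add: cinner_self_eq_0)
qed

lemma norm_add_sq:
  "(norm (x + y::'a::chilbert_space))\<^sup>2 = (norm x)\<^sup>2 + 2 * Re (cinner x y) + (norm y)\<^sup>2"
proof -
  have "Re (cinner (x+y) (x+y)) = Re (cinner x x) + Re (cinner x y) + Re (cinner y x) + Re (cinner y y)"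
    by (simp add: cinner_add_left cinner_add_right)
  moreover have "Re (cinner y x) = Re (cinner x y)"
    by (subst cinner_cnj) simp
  ultimately show ?thesis by (simp add: Re_cinner_self)
qed

lemma norm_diff_sq:
  "(norm (x - y::'a::chilbert_space))\<^sup>2 = (norm x)\<^sup>2 - 2 * Re (cinner x y) + (norm y)\<^sup>2"
  using norm_add_sq[of x "- y"] by (simp add: cinner_minus_right)

lemma Cauchy_Schwarz_c: "cmod (cinner (x::'a::chilbert_space) y) \<le> norm x * norm y"
proof (cases "y = 0")
  case True then show ?thesis by simp
next
  case False
  define a where "a = cinner x y"
  define n where "n = (norm y)\<^sup>2"
  have n: "n > 0" using False by (simp add: n_def)
  define t where "t = a / complex_of_real n"
  have "complex_of_real ((norm (x - scaleC t y))\<^sup>2) = cinner (x - scaleC t y) (x - scaleC t y)"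
    by (simp add: cinner_self)
  also have "\<dots> = cinner x x - cnj t * a - t * cinner y x + t * cnj t * cinner y y"
    by (simp add: cinner_simps a_def algebra_simps)
  also have "cinner y x = cnj a" by (simp add: a_def cinner_cnj[of y x])
  also have "cinner y y = complex_of_real n" by (simp add: cinner_self n_def)
  also have "cinner x x - cnj t * a - t * cnj a + t * cnj t * complex_of_real n
      = complex_of_real ((norm x)\<^sup>2 - (cmod a)\<^sup>2 / n)"
    using n by (simp add: t_def cinner_self field_simps complex_mult_cnj[symmetric])
      (metis complex_norm_square of_real_power)
  finally have "(norm (x - scaleC t y))\<^sup>2 = (norm x)\<^sup>2 - (cmod a)\<^sup>2 / n"
    by (simp only: of_real_eq_iff)
  then have "(cmod a)\<^sup>2 / n \<le> (norm x)\<^sup>2"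
    by (metis diff_ge_0_iff_ge zero_le_power2)
  then have "(cmod a)\<^sup>2 \<le> (norm x * norm y)\<^sup>2"
    using n by (simp add: field_simps n_def power_mult_distrib)
  then show ?thesis unfolding a_def
    by (meson mult_nonneg_nonneg norm_ge_zero power2_le_imp_le)
qed

lemma bounded_bilinear_cinner: "bounded_bilinear (cinner :: 'a::chilbert_space \<Rightarrow> 'a \<Rightarrow> complex)"
proof
  fix a a' b b' :: 'a and r :: real
  show "cinner (a + a') b = cinner a b + cinner a' b" by (rule cinner_add_left)
  show "cinner a (b + b') = cinner a b + cinner a b'" by (rule cinner_add_right)
  show "cinner (scaleR r a) b = scaleR r (cinner a b)" by (simp add: cinner_scaleR_left scaleR_conv_of_real)
  show "cinner a (scaleR r b) = scaleR r (cinner a b)" by (simp add: cinner_scaleR_right scaleR_conv_of_real)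
  show "\<exists>K. \<forall>a b. norm (cinner a b) \<le> norm a * norm b * K"
    by (rule exI[of _ 1]) (simp add: Cauchy_Schwarz_c)
qed

lemmas tendsto_cinner [tendsto_intros] = bounded_bilinear.tendsto[OF bounded_bilinear_cinner]
lemmas continuous_on_cinner [continuous_intros] = bounded_bilinear.continuous_on[OF bounded_bilinear_cinner]

lemma bounded_linear_scaleC: "bounded_linear (scaleC c :: 'a::chilbert_space \<Rightarrow> 'a)"
  by (rule bounded_linear_intro[where K="cmod c"])
    (auto simp: scaleC_add_right norm_scaleC scaleC_scaleR_commute mult.commute)

lemma bounded_linear_cinner_left: "bounded_linear (\<lambda>x::'a::chilbert_space. cinner x y)"
  by (rule bounded_bilinear.bounded_linear_left[OF bounded_bilinear_cinner])

lemma bounded_linear_cinner_right: "bounded_linear (\<lambda>y::'a::chilbert_space. cinner x y)"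
  by (rule bounded_bilinear.bounded_linear_right[OF bounded_bilinear_cinner])


section \<open>Complex subspaces, projections, Riesz, adjoints\<close>

definition csubspace :: "'a::chilbert_space set \<Rightarrow> bool" where
  "csubspace M \<longleftrightarrow> 0 \<in> M \<and> (\<forall>x\<in>M. \<forall>y\<in>M. x + y \<in> M) \<and> (\<forall>c. \<forall>x\<in>M. scaleC c x \<in> M)"

lemma csubspace_0: "csubspace M \<Longrightarrow> 0 \<in> M"
  by (simp add: csubspace_def)

lemma csubspace_add: "csubspace M \<Longrightarrow> x \<in> M \<Longrightarrow> y \<in> M \<Longrightarrow> x + y \<in> M"
  by (simp add: csubspace_def)

lemma csubspace_scaleC: "csubspace M \<Longrightarrow> x \<in> M \<Longrightarrow> scaleC c x \<in> M"
  by (simp add: csubspace_def)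

lemma csubspace_scaleR: "csubspace M \<Longrightarrow> x \<in> M \<Longrightarrow> scaleR r x \<in> M"
  by (simp add: csubspace_def scaleR_scaleC)

lemma csubspace_uminus: "csubspace M \<Longrightarrow> x \<in> M \<Longrightarrow> - x \<in> M"
  using csubspace_scaleR[of M x "-1"] by simp

lemma csubspace_diff: "csubspace M \<Longrightarrow> x \<in> M \<Longrightarrow> y \<in> M \<Longrightarrow> x - y \<in> M"
  using csubspace_add[of M x "- y"] csubspace_uminus[of M y] by simp

lemma csubspace_closure:
  assumes "csubspace (S::'a::chilbert_space set)"
  shows "csubspace (closure S)"
  unfolding csubspace_def
proof (intro conjI ballI allI)
  show "0 \<in> closure S" using assms csubspace_0 closure_subset by blast
next
  fix x y assume "x \<in> closure S" "y \<in> closure S"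
  then obtain u v where u: "\<And>n. u n \<in> S" "u \<longlonglongrightarrow> x" and v: "\<And>n. v n \<in> S" "v \<longlonglongrightarrow> y"
    by (meson closure_sequential)
  have "(\<lambda>n. u n + v n) \<longlonglongrightarrow> x + y" using u v by (intro tendsto_intros)
  moreover have "\<And>n. u n + v n \<in> S" using u v assms csubspace_add by blast
  ultimately show "x + y \<in> closure S" by (meson closure_sequential)
next
  fix c x assume "x \<in> closure S"
  then obtain u where u: "\<And>n. u n \<in> S" "u \<longlonglongrightarrow> x"
    by (meson closure_sequential)
  have "(\<lambda>n. scaleC c (u n)) \<longlonglongrightarrow> scaleC c x"
    using u bounded_linear.tendsto[OF bounded_linear_scaleC] by blast
  moreover have "\<And>n. scaleC c (u n) \<in> S" using u assms csubspace_scaleC by blast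
  ultimately show "scaleC c x \<in> closure S" by (meson closure_sequential)
qed

lemma parallelogram_c:
  "(norm (u + v::'a::chilbert_space))\<^sup>2 + (norm (u - v))\<^sup>2 = 2 * (norm u)\<^sup>2 + 2 * (norm v)\<^sup>2"
  by (simp add: norm_add_sq norm_diff_sq)

lemma orth_variation:
  fixes w z :: "'a::chilbert_space"
  assumes "\<And>t. (norm w)\<^sup>2 \<le> (norm (w - scaleC t z))\<^sup>2"
  shows "cinner w z = 0"
proof -
  define a where "a = cinner w z"
  define s where "s = 1 / ((norm z)\<^sup>2 + 1)"
  have "(norm z)\<^sup>2 + 1 > 0" by (intro add_nonneg_pos) auto
  then have s: "s > 0" by (simp add: s_def)
  define t where "t = complex_of_real s * a"
  have "(norm (w - scaleC t z))\<^sup>2 = (norm w)\<^sup>2 - 2 * Re (cinner w (scaleC t z)) + (norm (scaleC t z))\<^sup>2"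
    by (rule norm_diff_sq)
  also have "Re (cinner w (scaleC t z)) = s * (cmod a)\<^sup>2"
  proof -
    have "cinner w (scaleC t z) = complex_of_real s * (a * cnj a)"
      by (simp add: cinner_scaleC_right t_def a_def)
    also have "a * cnj a = complex_of_real ((cmod a)\<^sup>2)"
      by (rule complex_norm_square[symmetric])
    finally show ?thesis by simp
  qed
  also have "(norm (scaleC t z))\<^sup>2 = s\<^sup>2 * (cmod a)\<^sup>2 * (norm z)\<^sup>2"
    using s by (simp add: norm_scaleC t_def norm_mult power_mult_distrib)
  finally have "0 \<le> - 2 * (s * (cmod a)\<^sup>2) + s\<^sup>2 * (cmod a)\<^sup>2 * (norm z)\<^sup>2"
    using assms[of t] by linarith
  then have "0 \<le> s * (cmod a)\<^sup>2 * (s * (norm z)\<^sup>2 - 2)"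
    by (simp add: algebra_simps power2_eq_square)
  moreover have "s * (norm z)\<^sup>2 < 1"
    using s by (simp add: s_def field_simps)
  ultimately have "s * (cmod a)\<^sup>2 \<le> 0"
  proof (rule_tac ccontr)
    assume h: "0 \<le> s * (cmod a)\<^sup>2 * (s * (norm z)\<^sup>2 - 2)" "s * (norm z)\<^sup>2 < 1"
      "\<not> s * (cmod a)\<^sup>2 \<le> 0"
    have "s * (cmod a)\<^sup>2 * (s * (norm z)\<^sup>2 - 2) < 0"
      by (rule mult_pos_neg) (use h in linarith)+
    with h show False by linarith
  qed
  then have "(cmod a)\<^sup>2 \<le> 0" using s by (simp add: mult_le_0_iff)
  then show ?thesis unfolding a_def by simp
qed

lemma proj_exists:
  fixes M :: "'a::chilbert_space set"
  assumes cl: "closed M" and sub: "csubspace M"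
  shows "\<exists>p\<in>M. \<forall>z\<in>M. cinner (x - p) z = 0"
proof -
  define d where "d = Inf ((\<lambda>m. norm (x - m)) ` M)"
  have ne: "M \<noteq> {}" using sub csubspace_0 by blast
  have bdd: "bdd_below ((\<lambda>m. norm (x - m)) ` M)" by (rule bdd_belowI[of _ 0]) auto
  have d_le: "d \<le> norm (x - m)" if "m \<in> M" for m
    unfolding d_def using bdd that by (simp add: cInf_lower)
  have d0: "0 \<le> d" unfolding d_def using ne by (intro cInf_greatest) auto
  have "\<exists>m\<in>M. norm (x - m) < d + 1 / real (Suc n)" for n
  proof -
    have "d < d + 1 / real (Suc n)" by simp
    then show ?thesis unfolding d_def using ne
      by (subst (asm) cInf_less_iff) (auto simp: bdd)
  qed
  then obtain m where m: "\<And>n. m n \<in> M" "\<And>n. norm (x - m n) < d + 1 / real (Suc n)"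
    by metis
  define b where "b n = (norm (x - m n))\<^sup>2 - d\<^sup>2" for n
  have b0: "b n \<ge> 0" for n using d_le[OF m(1)[of n]] d0 by (simp add: b_def power_mono)
  have lim1: "(\<lambda>n. norm (x - m n)) \<longlonglongrightarrow> d"
  proof (rule tendsto_sandwich[of "\<lambda>n. d" _ _ "\<lambda>n. d + 1 / real (Suc n)"])
    show "\<forall>\<^sub>F n in sequentially. d \<le> norm (x - m n)" using d_le m by auto
    show "\<forall>\<^sub>F n in sequentially. norm (x - m n) \<le> d + 1 / real (Suc n)"
      by (intro always_eventually allI less_imp_le m(2))
    show "(\<lambda>n. d) \<longlonglongrightarrow> d" by simp
    show "(\<lambda>n. d + 1 / real (Suc n)) \<longlonglongrightarrow> d"
      using tendsto_add[OF tendsto_const[of d] LIMSEQ_inverse_real_of_nat]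
      by (simp add: inverse_eq_divide)
  qed
  have blim: "b \<longlonglongrightarrow> 0"
  proof -
    have "(\<lambda>n. (norm (x - m n))\<^sup>2 - d\<^sup>2) \<longlonglongrightarrow> d\<^sup>2 - d\<^sup>2"
      by (intro tendsto_intros lim1)
    then show ?thesis by (simp add: b_def [abs_def])
  qed
  have par: "(norm (m n - m k))\<^sup>2 \<le> 2 * b n + 2 * b k" for n k
  proof -
    define u where "u = x - m n"
    define v where "v = x - m k"
    have "u + v = scaleR 2 (x - scaleR (1/2) (m n + m k))"
      by (simp add: u_def v_def algebra_simps scaleR_2)
    then have "norm (u + v) = 2 * norm (x - scaleR (1/2) (m n + m k))" by simp
    moreover have "scaleR (1/2) (m n + m k) \<in> M"
      using sub m(1) csubspace_add csubspace_scaleR by blast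
    ultimately have "2 * d \<le> norm (u + v)" using d_le by fastforce
    then have "(2 * d)\<^sup>2 \<le> (norm (u + v))\<^sup>2" using d0 by (intro power_mono) auto
    moreover have "u - v = m k - m n" by (simp add: u_def v_def)
    moreover have "norm (m k - m n) = norm (m n - m k)" by (rule norm_minus_commute)
    ultimately show ?thesis using parallelogram_c[of u v]
      by (simp add: b_def u_def v_def power_mult_distrib)
  qed
  have "Cauchy m"
  proof (rule metric_CauchyI)
    fix e :: real assume e: "e > 0"
    have "\<forall>\<^sub>F n in sequentially. b n < e\<^sup>2 / 4"
      using blim e by (intro order_tendstoD(2)) auto
    then obtain N where N: "\<And>n. n \<ge> N \<Longrightarrow> b n < e\<^sup>2 / 4"
      by (auto simp: eventually_sequentially)
    show "\<exists>N. \<forall>n\<ge>N. \<forall>k\<ge>N. dist (m n) (m k) < e"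
    proof (intro exI allI impI)
      fix n k assume "n \<ge> N" "k \<ge> N"
      then have "(norm (m n - m k))\<^sup>2 < e\<^sup>2"
        using par[of n k] N[of n] N[of k] by linarith
      then show "dist (m n) (m k) < e"
        using e by (simp add: dist_norm power_less_imp_less_base)
    qed
  qed
  then obtain p where p: "m \<longlonglongrightarrow> p" by (auto simp: Cauchy_convergent_iff convergent_def)
  have pM: "p \<in> M" using closed_sequentially[OF cl m(1) p] .
  have "(\<lambda>n. norm (x - m n)) \<longlonglongrightarrow> norm (x - p)" by (intro tendsto_intros p)
  then have dp: "norm (x - p) = d" using lim1 LIMSEQ_unique by blast
  have "\<forall>z\<in>M. cinner (x - p) z = 0"
  proof
    fix z assume zM: "z \<in> M"
    show "cinner (x - p) z = 0"
    proof (rule orth_variation)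
      fix t
      have "p + scaleC t z \<in> M" using sub pM zM csubspace_add csubspace_scaleC by blast
      then have "d \<le> norm (x - (p + scaleC t z))" by (rule d_le)
      then have "norm (x - p) \<le> norm (x - p - scaleC t z)" using dp by (simp add: algebra_simps)
      then show "(norm (x - p))\<^sup>2 \<le> (norm (x - p - scaleC t z))\<^sup>2"
        by (simp add: power_mono)
    qed
  qed
  with pM show ?thesis by blast
qed

lemma proj_unique_aux:
  fixes M :: "'a::chilbert_space set"
  assumes sub: "csubspace M"
    and "p \<in> M" "\<forall>z\<in>M. cinner (x - p) z = 0"
    and "q \<in> M" "\<forall>z\<in>M. cinner (x - q) z = 0"
  shows "p = q"
proof -
  have pq: "p - q \<in> M" using assms csubspace_diff by blast
  have "cinner (x - q) (p - q) - cinner (x - p) (p - q) = 0" using assms pq by simp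
  then have "cinner (p - q) (p - q) = 0" by (simp add: cinner_diff_left algebra_simps)
  then show ?thesis by (simp add: cinner_self_eq_0)
qed

locale closed_csub =
  fixes M :: "'a::chilbert_space set"
  assumes closed_M: "closed M" and csub_M: "csubspace M"
begin

lemma ex1_proj: "\<exists>!p. p \<in> M \<and> (\<forall>z\<in>M. cinner (x - p) z = 0)"
  using proj_exists[OF closed_M csub_M, of x] proj_unique_aux[OF csub_M] by blast

lemma proj_in: "orth_proj M x \<in> M"
  using theI'[OF ex1_proj[of x]] unfolding orth_proj_def by blast

lemma proj_orth: "z \<in> M \<Longrightarrow> cinner (x - orth_proj M x) z = 0"
  using theI'[OF ex1_proj[of x]] unfolding orth_proj_def by blast

lemma proj_unique: "p \<in> M \<Longrightarrow> (\<And>z. z \<in> M \<Longrightarrow> cinner (x - p) z = 0) \<Longrightarrow> orth_proj M x = p"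
  unfolding orth_proj_def using ex1_proj[of x] by (intro the1_equality) auto

lemma proj_id: "m \<in> M \<Longrightarrow> orth_proj M m = m"
  by (rule proj_unique) auto

lemma proj_perp: "(\<And>z. z \<in> M \<Longrightarrow> cinner x z = 0) \<Longrightarrow> orth_proj M x = 0"
  by (rule proj_unique) (auto simp: csubspace_0[OF csub_M])

lemma proj_add: "orth_proj M (x + y) = orth_proj M x + orth_proj M y"
proof (rule proj_unique)
  show "orth_proj M x + orth_proj M y \<in> M" using proj_in csub_M csubspace_add by blast
  fix z assume "z \<in> M"
  then show "cinner (x + y - (orth_proj M x + orth_proj M y)) z = 0"
    using proj_orth[of z x] proj_orth[of z y]
    by (simp add: cinner_add_left cinner_diff_left algebra_simps)
qed

lemma proj_scaleC: "orth_proj M (scaleC c x) = scaleC c (orth_proj M x)"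
proof (rule proj_unique)
  show "scaleC c (orth_proj M x) \<in> M" using proj_in csub_M csubspace_scaleC by blast
  fix z assume "z \<in> M"
  then show "cinner (scaleC c x - scaleC c (orth_proj M x)) z = 0"
    using proj_orth[of z x]
    by (simp add: cinner_scaleC_left cinner_diff_left algebra_simps)
qed

lemma proj_pythag: "(norm x)\<^sup>2 = (norm (orth_proj M x))\<^sup>2 + (norm (x - orth_proj M x))\<^sup>2"
proof -
  have "cinner (orth_proj M x) (x - orth_proj M x) = 0"
    using proj_orth[OF proj_in, of x x] by (subst cinner_cnj) simp
  then show ?thesis using norm_add_sq[of "orth_proj M x" "x - orth_proj M x"] by simp
qed

lemma norm_proj_le: "norm (orth_proj M x) \<le> norm x"
  using proj_pythag[of x]
  by (metis abs_norm_cancel le_add_same_cancel1 real_le_rsqrt real_sqrt_abs zero_le_power2)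

lemma cblinear_proj: "cblinear (orth_proj M)"
  unfolding cblinear_def
proof (intro conjI allI)
  show "bounded_linear (orth_proj M)"
    by (rule bounded_linear_intro[where K=1])
      (auto simp: proj_add proj_scaleC scaleR_scaleC norm_proj_le)
qed (rule proj_scaleC)

lemma proj_selfadj: "cinner (orth_proj M x) y = cinner x (orth_proj M y)"
proof -
  have 1: "cinner (orth_proj M x) (y - orth_proj M y) = 0"
    using proj_orth[OF proj_in, of y x] by (subst cinner_cnj) simp
  have 2: "cinner (x - orth_proj M x) (orth_proj M y) = 0"
    using proj_orth[OF proj_in] by simp
  show ?thesis using 1 2 by (simp add: cinner_diff_left cinner_diff_right)
qed

lemma proj_idem: "orth_proj M (orth_proj M x) = orth_proj M x"
  by (rule proj_id[OF proj_in])

end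

lemma cblinear_add: "cblinear S \<Longrightarrow> S (x + y) = S x + S y"
  unfolding cblinear_def by (simp add: bounded_linear.axioms(1) linear_add)

lemma cblinear_scaleC: "cblinear S \<Longrightarrow> S (scaleC c x) = scaleC c (S x)"
  unfolding cblinear_def by simp

lemma cblinear_bl: "cblinear S \<Longrightarrow> bounded_linear S"
  unfolding cblinear_def by simp

lemma cblinear_diff: "cblinear S \<Longrightarrow> S (x - y) = S x - S y"
  unfolding cblinear_def by (simp add: linear_diff bounded_linear.linear)

lemma cblinear_zero: "cblinear S \<Longrightarrow> S 0 = 0"
  unfolding cblinear_def by (simp add: linear_0 bounded_linear.linear)

lemma cblinear_minus: "cblinear S \<Longrightarrow> S (- x) = - S x"
  unfolding cblinear_def by (simp add: linear_neg bounded_linear.linear)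

lemma cblinear_scaleR: "cblinear S \<Longrightarrow> S (scaleR r x) = scaleR r (S x)"
  unfolding cblinear_def by (simp add: linear_scale bounded_linear.linear)

lemma cblinear_compose:
  assumes S: "cblinear S" and U: "cblinear U" shows "cblinear (S \<circ> U)"
proof -
  have "bounded_linear (\<lambda>x. S (U x))"
    using bounded_linear_compose[OF cblinear_bl[OF S] cblinear_bl[OF U]] .
  then show ?thesis using S U unfolding cblinear_def o_def by simp
qed

lemma cblinear_ident: "cblinear (\<lambda>x. x)"
  unfolding cblinear_def by (simp add: bounded_linear_ident)

lemma cblinear_intro:
  assumes "\<And>x y. S (x + y) = S x + S y" "\<And>c x. S (scaleC c x) = scaleC c (S x)"
    "\<And>x. norm (S x) \<le> norm x * K"
  shows "cblinear S"
  unfolding cblinear_def using assms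
  by (auto intro!: bounded_linear_intro[where K=K] simp: scaleR_scaleC)

lemma cblinear_csubspace_range: "cblinear S \<Longrightarrow> csubspace (range S)"
  unfolding csubspace_def
  by (auto simp: cblinear_zero cblinear_add[symmetric] cblinear_scaleC[symmetric] intro: range_eqI[of _ _ 0])

lemma cblinear_norm_bound: "cblinear S \<Longrightarrow> \<exists>K>0. \<forall>x. norm (S x) \<le> norm x * K"
  unfolding cblinear_def using bounded_linear.pos_bounded by blast

lemma cblinear_onorm: "cblinear S \<Longrightarrow> norm (S x) \<le> onorm S * norm x"
  unfolding cblinear_def by (simp add: onorm)

lemma cblinear_continuous: "cblinear S \<Longrightarrow> continuous_on X S"
  unfolding cblinear_def by (simp add: linear_continuous_on)

lemma riesz:
  fixes f :: "'a::chilbert_space \<Rightarrow> complex"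
  assumes bl: "bounded_linear f" and sc: "\<And>c x. f (scaleC c x) = c * f x"
  shows "\<exists>z. \<forall>x. f x = cinner x z"
proof (cases "\<forall>x. f x = 0")
  case True then show ?thesis by (intro exI[of _ 0]) simp
next
  case False
  then obtain x0 where x0: "f x0 \<noteq> 0" by blast
  define M where "M = {x. f x = 0}"
  have clM: "closed M" unfolding M_def
    by (intro closed_Collect_eq continuous_on_const linear_continuous_on bl)
  have fadd: "f (x + y) = f x + f y" for x y using bl by (simp add: linear_add bounded_linear.linear)
  have fdiff: "f (x - y) = f x - f y" for x y using bl by (simp add: linear_diff bounded_linear.linear)
  have subM: "csubspace M" unfolding M_def csubspace_def
    using sc fadd by (auto simp: sc[of 0 0, simplified])
  interpret closed_csub M using clM subM by unfold_locales
  define w where "w = x0 - orth_proj M x0"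
  have fw: "f w = f x0" using proj_in[of x0] by (simp add: w_def fdiff M_def)
  have wperp: "\<And>z. z \<in> M \<Longrightarrow> cinner w z = 0" using proj_orth by (simp add: w_def)
  have f0: "f 0 = 0" using bl by (simp add: linear_0 bounded_linear.linear)
  have w0: "w \<noteq> 0" using fw x0 f0 by auto
  have ww: "cinner w w \<noteq> 0" using w0 by (simp add: cinner_self_eq_0)
  define z where "z = scaleC (cnj (f w / cinner w w)) w"
  have "f x = cinner x z" for x
  proof -
    define y where "y = x - scaleC (f x / f w) w"
    have "f y = 0" using x0 fw by (simp add: y_def fdiff sc)
    then have "cinner w y = 0" using wperp by (simp add: M_def)
    then have "cinner y w = 0" by (subst cinner_cnj) simp
    then have "cinner x w = (f x / f w) * cinner w w"
      by (simp add: y_def cinner_diff_left cinner_scaleC_left)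
    then show ?thesis using x0 fw ww
      by (simp add: z_def cinner_scaleC_right)
  qed
  then show ?thesis by blast
qed

lemma adjoint_exists:
  fixes S :: "'a::chilbert_space \<Rightarrow> 'a"
  assumes S: "cblinear S"
  shows "\<exists>S'. cblinear S' \<and> (\<forall>x y. cinner (S x) y = cinner x (S' y))"
proof -
  have "\<exists>z. \<forall>x. cinner (S x) y = cinner x z" for y
  proof (rule riesz)
    show "bounded_linear (\<lambda>x. cinner (S x) y)"
      using bounded_linear_compose[OF bounded_linear_cinner_left cblinear_bl[OF S]] by (simp add: o_def)
    show "cinner (S (scaleC c x)) y = c * cinner (S x) y" for c x
      using S by (simp add: cblinear_scaleC cinner_scaleC_left)
  qed
  then obtain S' where S': "\<And>x y. cinner (S x) y = cinner x (S' y)" by metis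
  obtain K where K: "K > 0" "\<And>x. norm (S x) \<le> norm x * K" using cblinear_norm_bound[OF S] by blast
  have "cblinear S'"
  proof (rule cblinear_intro[where K=K])
    fix x y show "S' (x + y) = S' x + S' y"
      by (rule cinner_ext_right) (simp add: S'[symmetric] cinner_add_right)
  next
    fix c x show "S' (scaleC c x) = scaleC c (S' x)"
      by (rule cinner_ext_right) (simp add: S'[symmetric] cinner_scaleC_right)
  next
    fix y
    have "(norm (S' y))\<^sup>2 = cmod (cinner (S' y) (S' y))" by (simp add: cmod_cinner_self)
    also have "cinner (S' y) (S' y) = cinner (S (S' y)) y"
      by (simp add: S')
    also have "cmod (cinner (S (S' y)) y) \<le> norm (S (S' y)) * norm y"
      by (rule Cauchy_Schwarz_c)
    also have "\<dots> \<le> norm (S' y) * K * norm y" using K by (simp add: mult_right_mono)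
    finally have *: "(norm (S' y))\<^sup>2 \<le> norm (S' y) * (norm y * K)" by (simp add: algebra_simps)
    show "norm (S' y) \<le> norm y * K"
    proof (cases "norm (S' y) = 0")
      case True then show ?thesis using K by simp
    next
      case False then show ?thesis using * by (simp add: power2_eq_square)
    qed
  qed
  with S' show ?thesis by blast
qed

lemma adjoint_unique_aux:
  fixes S :: "'a::chilbert_space \<Rightarrow> 'a"
  assumes "\<forall>x y. cinner (S x) y = cinner x (S1 y)" "\<forall>x y. cinner (S x) y = cinner x (S2 y)"
  shows "S1 = S2"
proof
  fix y show "S1 y = S2 y" by (rule cinner_ext_right) (metis assms)
qed

lemma adjoint_prop:
  fixes S :: "'a::chilbert_space \<Rightarrow> 'a"
  assumes S: "cblinear S"
  shows "cblinear (adjoint S)" "cinner (S x) y = cinner x (adjoint S y)"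
proof -
  have ex1: "\<exists>!S'. cblinear S' \<and> (\<forall>x y. cinner (S x) y = cinner x (S' y))"
    using adjoint_exists[OF S] adjoint_unique_aux by blast
  have "cblinear (adjoint S) \<and> (\<forall>x y. cinner (S x) y = cinner x (adjoint S y))"
    unfolding adjoint_def by (rule theI'[OF ex1])
  then show "cblinear (adjoint S)" "cinner (S x) y = cinner x (adjoint S y)" by auto
qed

lemma adjoint_eqI:
  fixes S :: "'a::chilbert_space \<Rightarrow> 'a"
  assumes S: "cblinear S" and "\<And>x y. cinner (S x) y = cinner x (S' y)"
  shows "adjoint S = S'"
  using adjoint_unique_aux[of S "adjoint S" S'] adjoint_prop[OF S] assms by auto


section \<open>Positive operators\<close>

lemma cnj_eq_of_Im0: "Im z = 0 \<Longrightarrow> cnj z = z"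
  by (simp add: complex_eq_iff)

definition herm :: "('a::chilbert_space \<Rightarrow> 'a) \<Rightarrow> bool" where
  "herm S \<longleftrightarrow> (\<forall>x y. cinner (S x) y = cinner x (S y))"

lemma hermD: "herm S \<Longrightarrow> cinner (S x) y = cinner x (S y)"
  by (simp add: herm_def)

lemma herm_Im: "herm S \<Longrightarrow> Im (cinner (S x) x) = 0"
proof -
  assume "herm S"
  then have "cinner (S x) x = cnj (cinner (S x) x)"
    by (metis cinner_cnj hermD)
  then show ?thesis by (metis cnj.simps(2) complex.expand neg_equal_zero)
qed

lemma positive_herm:
  fixes A :: "'a::chilbert_space \<Rightarrow> 'a"
  assumes pos: "positive_op A"
  shows "herm A"
proof -
  have A: "cblinear A" using pos by (simp add: positive_op_def)
  define q where "q x y = cinner (A x) y - cinner x (A y)" for x y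
  have qxx: "q x x = 0" for x
  proof -
    have "Im (cinner (A x) x) = 0" using pos by (simp add: positive_op_def)
    then have "cnj (cinner (A x) x) = cinner (A x) x" by (rule cnj_eq_of_Im0)
    then show ?thesis by (simp add: q_def cinner_cnj[of x "A x"])
  qed
  have qadd: "q (x + y) (x + y) = q x x + q x y + q y x + q y y" for x y
    by (simp add: q_def cblinear_add[OF A] cinner_add_left cinner_add_right algebra_simps)
  have qi: "q (x + scaleC \<i> y) (x + scaleC \<i> y) = q x x - \<i> * q x y + \<i> * q y x + q y y" for x y
    by (simp add: q_def cblinear_add[OF A] cblinear_scaleC[OF A] cinner_add_left cinner_add_right
        cinner_scaleC_left cinner_scaleC_right algebra_simps)
  have "q x y = 0" for x y
  proof -
    have 1: "q x y + q y x = 0" using qadd[of x y] qxx by simp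
    have 2: "q y x - q x y = 0" using qi[of x y] qxx
      by (simp add: algebra_simps)
    from 1 2 show ?thesis by (simp add: algebra_simps)
  qed
  then show ?thesis by (simp add: herm_def q_def)
qed

lemma positive_opD:
  assumes "positive_op A"
  shows "cblinear A" "Re (cinner (A x) x) \<ge> 0" "Im (cinner (A x) x) = 0"
  using assms by (auto simp: positive_op_def)

lemma positive_zero:
  fixes B :: "'a::chilbert_space \<Rightarrow> 'a"
  assumes pos: "positive_op B" and y0: "Re (cinner (B y) y) = 0"
  shows "B y = 0"
proof -
  have B: "cblinear B" and h: "herm B" using pos positive_herm by (auto simp: positive_op_def)
  define z where "z = B y"
  have expand: "Re (cinner (B (y + scaleR t z)) (y + scaleR t z))
      = Re (cinner (B y) y) + 2 * t * (norm z)\<^sup>2 + t\<^sup>2 * Re (cinner (B z) z)" for t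
  proof -
    have "cinner (B z) y = cnj (cinner (B y) z)"
      using hermD[OF h, of z y] by (metis cinner_cnj)
    moreover have "cinner (B y) z = complex_of_real ((norm z)\<^sup>2)"
      by (simp add: z_def cinner_self)
    ultimately show ?thesis
      by (simp add: cblinear_add[OF B] cblinear_scaleR[OF B] cinner_add_left cinner_add_right
          cinner_scaleR_left cinner_scaleR_right power2_eq_square algebra_simps)
  qed
  define K where "K = Re (cinner (B z) z)"
  have K0: "K \<ge> 0" using pos by (simp add: positive_op_def K_def)
  have "(norm z)\<^sup>2 \<le> 0"
  proof (rule ccontr)
    assume "\<not> (norm z)\<^sup>2 \<le> 0"
    then have n: "(norm z)\<^sup>2 > 0" by simp
    define t where "t = - (norm z)\<^sup>2 / (K + 1)"
    have t: "t < 0" using n K0 by (simp add: t_def)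
    have "0 \<le> Re (cinner (B (y + scaleR t z)) (y + scaleR t z))" using pos by (simp add: positive_op_def)
    also have "\<dots> = t * (2 * (norm z)\<^sup>2 + t * K)" using expand[of t] y0
      by (simp add: K_def power2_eq_square algebra_simps)
    finally have c1: "0 \<le> t * (2 * (norm z)\<^sup>2 + t * K)" .
    have "t * K \<ge> - (norm z)\<^sup>2"
    proof -
      have e: "t * K = - ((norm z)\<^sup>2 * (K / (K + 1)))" by (simp add: t_def)
      have "K / (K + 1) \<le> 1" using K0 by simp
      then have "(norm z)\<^sup>2 * (K / (K + 1)) \<le> (norm z)\<^sup>2" using n by (intro mult_left_le) auto
      then show ?thesis using e by linarith
    qed
    have "2 * (norm z)\<^sup>2 + t * K > 0" using n \<open>t * K \<ge> - (norm z)\<^sup>2\<close> by linarith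
    then have "t * (2 * (norm z)\<^sup>2 + t * K) < 0" using t by (simp add: mult_neg_pos)
    with c1 show False by linarith
  qed
  then show ?thesis by (simp add: z_def)
qed

lemma herm_norm_bound:
  fixes X :: "'a::chilbert_space \<Rightarrow> 'a"
  assumes X: "cblinear X" "herm X"
    and lo: "\<And>x. 0 \<le> Re (cinner (X x) x)" and hi: "\<And>x. Re (cinner (X x) x) \<le> (norm x)\<^sup>2"
  shows "norm (X x) \<le> norm x"
proof -
  have key: "4 * Re (cinner (X u) v) \<le> 2 * (norm u)\<^sup>2 + 2 * (norm v)\<^sup>2" for u v
  proof -
    have "Re (cinner (X v) u) = Re (cinner (X u) v)"
      using hermD[OF X(2), of v u] by (metis cinner_cnj complex_cnj_cnj Re_complex_div_lemma cnj.simps(1))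
    then have "Re (cinner (X (u + v)) (u + v)) - Re (cinner (X (u - v)) (u - v)) = 4 * Re (cinner (X u) v)"
      by (simp add: cblinear_add[OF X(1)] cblinear_diff[OF X(1)] cinner_add_left cinner_add_right
          cinner_diff_left cinner_diff_right)
    moreover have "Re (cinner (X (u + v)) (u + v)) \<le> (norm (u + v))\<^sup>2" by (rule hi)
    moreover have "0 \<le> Re (cinner (X (u - v)) (u - v))" by (rule lo)
    moreover have "(norm (u + v))\<^sup>2 \<le> 2 * (norm u)\<^sup>2 + 2 * (norm v)\<^sup>2"
      using parallelogram_c[of u v] by (metis le_add_same_cancel1 zero_le_power2)
    ultimately show ?thesis by linarith
  qed
  show ?thesis
  proof (cases "X x = 0")
    case True then show ?thesis by simp
  next
    case False
    then have nX: "norm (X x) > 0" by simp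
    define r where "r = norm x / norm (X x)"
    have r0: "r \<ge> 0" using nX by (simp add: r_def)
    have "Re (cinner (X x) (scaleR r (X x))) = r * (norm (X x))\<^sup>2"
      by (simp add: cinner_scaleR_right Re_cinner_self)
    also have "\<dots> = norm x * norm (X x)" using nX by (simp add: r_def power2_eq_square)
    finally have "4 * (norm x * norm (X x)) \<le> 2 * (norm x)\<^sup>2 + 2 * (norm (scaleR r (X x)))\<^sup>2"
      using key[of x "scaleR r (X x)"] by simp
    also have "norm (scaleR r (X x)) = norm x" using nX r0 by (simp add: r_def)
    finally have "norm x * norm (X x) \<le> norm x * norm x" by (simp add: power2_eq_square)
    moreover have "norm x > 0"
      using False cblinear_zero[OF X(1)] by (metis norm_le_zero_iff not_le)
    ultimately show ?thesis by simp
  qed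
qed

section \<open>Coefficients of the square root series\<close>

definition sqc :: "nat \<Rightarrow> real" where
  "sqc n = (-1) ^ n * ((1/2) gchoose n)"

lemma sqc_0 [simp]: "sqc 0 = 1"
  by (simp add: sqc_def)

lemma sqc_Suc: "sqc (Suc n) = sqc n * (real n - 1/2) / (real n + 1)"
proof -
  have "(1/2::real) * ((1/2) gchoose n) = of_nat n * ((1/2) gchoose n) + of_nat (Suc n) * ((1/2) gchoose (Suc n))"
    by (rule gbinomial_mult_1)
  then have "(real n + 1) * ((1/2::real) gchoose (Suc n)) = (1/2 - real n) * ((1/2) gchoose n)"
    by (simp add: algebra_simps)
  then have "((1/2::real) gchoose (Suc n)) = (1/2 - real n) * ((1/2) gchoose n) / (real n + 1)"
    by (simp add: field_simps)
  then have "sqc (Suc n) = (-1) ^ Suc n * ((1/2 - real n) * ((1/2) gchoose n) / (real n + 1))"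
    by (simp add: sqc_def)
  also have "\<dots> = sqc n * (real n - 1/2) / (real n + 1)"
    by (simp add: sqc_def algebra_simps)
  finally show ?thesis .
qed

lemma sqc_Suc0 [simp]: "sqc (Suc 0) = - 1/2"
  using sqc_Suc[of 0] by simp

lemma sqc_1: "sqc 1 = - 1/2"
  by simp

lemma sqc_Suc_nonpos: "sqc (Suc n) \<le> 0"
proof (induction n)
  case 0 then show ?case by simp
next
  case (Suc n)
  have "sqc (Suc (Suc n)) = sqc (Suc n) * ((real (Suc n) - 1/2) / (real (Suc n) + 1))"
    by (simp only: sqc_Suc[of "Suc n"] times_divide_eq_right)
  moreover have "(real (Suc n) - 1/2) / (real (Suc n) + 1) \<ge> 0" by simp
  ultimately show ?case using Suc by (simp only: mult_nonpos_nonneg)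
qed

lemma sqc_nonpos: "n \<ge> 1 \<Longrightarrow> sqc n \<le> 0"
  using sqc_Suc_nonpos by (cases n) auto

lemma sqc_telescope: "(\<Sum>n<N. - sqc (Suc n)) + 2 * (real N + 1) * (- sqc (Suc N)) = 1"
proof (induction N)
  case 0 then show ?case by (simp add: sqc_1)
next
  case (Suc N)
  have e: "sqc (Suc (Suc N)) = sqc (Suc N) * (real (Suc N) - 1/2) / (real (Suc N) + 1)"
    by (rule sqc_Suc)
  have "2 * (real (Suc N) + 1) * (- sqc (Suc (Suc N))) = - sqc (Suc N) * (2 * real N + 1)"
    unfolding e by (simp add: field_simps)
  then show ?case using Suc by (simp add: algebra_simps)
qed

lemma sqc_tail_le: "(\<Sum>n<N. \<bar>sqc (Suc n)\<bar>) \<le> 1"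
proof -
  have "(\<Sum>n<N. \<bar>sqc (Suc n)\<bar>) = (\<Sum>n<N. - sqc (Suc n))"
    by (intro sum.cong refl) (simp add: sqc_nonpos abs_of_nonpos)
  moreover have "2 * (real N + 1) * (- sqc (Suc N)) \<ge> 0"
    using sqc_Suc_nonpos[of N] by (intro mult_nonneg_nonneg) auto
  ultimately show ?thesis using sqc_telescope[of N] by linarith
qed

lemma summable_sqc_tail: "summable (\<lambda>n. \<bar>sqc (Suc n)\<bar>)"
  by (rule summableI_nonneg_bounded[where x=1]) (auto simp: sqc_tail_le)

lemma summable_abs_sqc: "summable (\<lambda>n. \<bar>sqc n\<bar>)"
  using summable_sqc_tail summable_Suc_iff by blast

lemma suminf_sqc_tail: "(\<Sum>n. sqc (Suc n)) \<ge> -1"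
proof -
  have s: "summable (\<lambda>n. - sqc (Suc n))"
  proof -
    have "(\<lambda>n. \<bar>sqc (Suc n)\<bar>) = (\<lambda>n. - sqc (Suc n))"
      by (rule ext) (simp add: abs_of_nonpos sqc_nonpos)
    then show ?thesis using summable_sqc_tail by simp
  qed
  have "(\<Sum>n. - sqc (Suc n)) \<le> 1"
  proof (rule suminf_le_const[OF s])
    fix N show "(\<Sum>n<N. - sqc (Suc n)) \<le> 1"
    proof -
      have "2 * (real N + 1) * (- sqc (Suc N)) \<ge> 0"
        using sqc_Suc_nonpos[of N] by (intro mult_nonneg_nonneg) auto
      then show ?thesis using sqc_telescope[of N] by linarith
    qed
  qed
  moreover have "(\<Sum>n. - sqc (Suc n)) = - (\<Sum>n. sqc (Suc n))"
    using s by (simp add: suminf_minus summable_minus_iff)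
  ultimately show ?thesis by simp
qed

lemma sqc_cauchy:
  "(\<Sum>k\<le>n. sqc k * sqc (n - k)) = (if n = 0 then 1 else if n = 1 then -1 else 0)"
proof -
  have "(\<Sum>k\<le>n. sqc k * sqc (n - k)) = (-1) ^ n * (\<Sum>k\<le>n. ((1/2::real) gchoose k) * ((1/2) gchoose (n - k)))"
    unfolding sum_distrib_left
  proof (intro sum.cong refl)
    fix k assume "k \<in> {..n}"
    then have "(-1::real) ^ k * (-1) ^ (n - k) = (-1) ^ n"
      by (simp add: power_add[symmetric])
    then show "sqc k * sqc (n - k) = (-1) ^ n * (((1/2) gchoose k) * ((1/2) gchoose (n - k)))"
      by (simp add: sqc_def algebra_simps)
  qed
  also have "(\<Sum>k\<le>n. ((1/2::real) gchoose k) * ((1/2) gchoose (n - k))) = (1/2 + 1/2) gchoose n"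
    using gbinomial_Vandermonde[of "1/2::real" "1/2" n] by (simp add: atMost_atLeast0)
  also have "(1/2 + 1/2 :: real) gchoose n = of_nat (1 choose n)"
    by (simp add: binomial_gbinomial)
  finally show ?thesis
    by (cases n; cases "n - 1") (auto simp: binomial_eq_0)
qed


section \<open>Cauchy product for bounded bilinear maps\<close>

lemma bb_Cauchy_product_sums:
  fixes a :: "nat \<Rightarrow> 'a::banach" and b :: "nat \<Rightarrow> 'b::banach"
    and prod :: "'a \<Rightarrow> 'b \<Rightarrow> 'c::banach"
  assumes bb: "bounded_bilinear prod"
    and a: "summable (\<lambda>k. norm (a k))"
    and b: "summable (\<lambda>k. norm (b k))"
  shows "(\<lambda>k. \<Sum>i\<le>k. prod (a i) (b (k - i))) sums prod (\<Sum>k. a k) (\<Sum>k. b k)"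
proof -
  obtain K where K: "K > 0" "\<And>x y. norm (prod x y) \<le> norm x * norm y * K"
    using bounded_bilinear.pos_bounded[OF bb] by blast
  let ?S1 = "\<lambda>n::nat. {..<n} \<times> {..<n}"
  let ?S2 = "\<lambda>n::nat. {(i,j). i + j < n}"
  have S1_mono: "\<And>m n. m \<le> n \<Longrightarrow> ?S1 m \<subseteq> ?S1 n" by auto
  have S2_le_S1: "\<And>n. ?S2 n \<subseteq> ?S1 n" by auto
  have S1_le_S2: "\<And>n. ?S1 (n div 2) \<subseteq> ?S2 n" by auto
  have finite_S1: "\<And>n. finite (?S1 n)" by simp
  with S2_le_S1 have finite_S2: "\<And>n. finite (?S2 n)" by (rule finite_subset)
  let ?g = "\<lambda>(i,j). prod (a i) (b j)"
  let ?f = "\<lambda>(i,j). norm (a i) * norm (b j) * K"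
  have f_nonneg: "\<And>x. 0 \<le> ?f x" using K by auto
  then have norm_sum_f: "\<And>A. norm (sum ?f A) = sum ?f A"
    unfolding real_norm_def by (simp only: abs_of_nonneg sum_nonneg [rule_format])
  have prod_sum: "prod (sum a {..<n}) (sum b {..<n}) = sum ?g (?S1 n)" for n
  proof -
    have "prod (sum a {..<n}) (sum b {..<n}) = (\<Sum>i<n. prod (a i) (sum b {..<n}))"
      by (rule bounded_bilinear.sum_left[OF bb])
    also have "\<dots> = (\<Sum>i<n. \<Sum>j<n. prod (a i) (b j))"
      by (simp only: bounded_bilinear.sum_right[OF bb])
    also have "\<dots> = sum ?g (?S1 n)" by (simp add: sum.cartesian_product)
    finally show ?thesis .
  qed
  have "(\<lambda>n. prod (\<Sum>k<n. a k) (\<Sum>k<n. b k)) \<longlonglongrightarrow> prod (\<Sum>k. a k) (\<Sum>k. b k)"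
    by (intro bounded_bilinear.tendsto[OF bb] summable_LIMSEQ summable_norm_cancel [OF a] summable_norm_cancel [OF b])
  then have 1: "(\<lambda>n. sum ?g (?S1 n)) \<longlonglongrightarrow> prod (\<Sum>k. a k) (\<Sum>k. b k)"
    by (simp only: prod_sum)
  have "(\<lambda>n. (\<Sum>k<n. norm (a k)) * (\<Sum>k<n. norm (b k)) * K) \<longlonglongrightarrow> (\<Sum>k. norm (a k)) * (\<Sum>k. norm (b k)) * K"
    using a b by (intro tendsto_mult summable_LIMSEQ tendsto_const)
  moreover have "(\<Sum>k<n. norm (a k)) * (\<Sum>k<n. norm (b k)) * K = sum ?f (?S1 n)" for n
  proof -
    have "(\<Sum>k<n. norm (a k)) * (\<Sum>k<n. norm (b k)) * K = (\<Sum>i<n. \<Sum>j<n. norm (a i) * norm (b j) * K)"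
      by (simp add: sum_distrib_left sum_distrib_right mult.assoc) (rule sum.swap)
    also have "\<dots> = sum ?f (?S1 n)" by (simp add: sum.cartesian_product)
    finally show ?thesis .
  qed
  ultimately have "(\<lambda>n. sum ?f (?S1 n)) \<longlonglongrightarrow> (\<Sum>k. norm (a k)) * (\<Sum>k. norm (b k)) * K"
    by simp
  then have "convergent (\<lambda>n. sum ?f (?S1 n))"
    by (rule convergentI)
  then have Cauchy: "Cauchy (\<lambda>n. sum ?f (?S1 n))"
    by (rule convergent_Cauchy)
  have "Zfun (\<lambda>n. sum ?f (?S1 n - ?S2 n)) sequentially"
  proof (rule ZfunI, simp only: eventually_sequentially norm_sum_f)
    fix r :: real
    assume r: "0 < r"
    from CauchyD [OF Cauchy r] obtain N
      where "\<forall>m\<ge>N. \<forall>n\<ge>N. norm (sum ?f (?S1 m) - sum ?f (?S1 n)) < r" ..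
    then have "\<And>m n. N \<le> n \<Longrightarrow> n \<le> m \<Longrightarrow> norm (sum ?f (?S1 m - ?S1 n)) < r"
      by (simp only: sum_diff finite_S1 S1_mono)
    then have N: "\<And>m n. N \<le> n \<Longrightarrow> n \<le> m \<Longrightarrow> sum ?f (?S1 m - ?S1 n) < r"
      by (simp only: norm_sum_f)
    show "\<exists>N. \<forall>n\<ge>N. sum ?f (?S1 n - ?S2 n) < r"
    proof (intro exI allI impI)
      fix n
      assume "2 * N \<le> n"
      then have n: "N \<le> n div 2" by simp
      have "sum ?f (?S1 n - ?S2 n) \<le> sum ?f (?S1 n - ?S1 (n div 2))"
        by (intro sum_mono2 finite_Diff finite_S1 f_nonneg Diff_mono subset_refl S1_le_S2)
      also have "\<dots> < r"
        using n div_le_dividend by (rule N)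
      finally show "sum ?f (?S1 n - ?S2 n) < r" .
    qed
  qed
  then have "Zfun (\<lambda>n. sum ?g (?S1 n - ?S2 n)) sequentially"
  proof (rule Zfun_le [rule_format])
    fix n
    have "norm (sum ?g (?S1 n - ?S2 n)) \<le> sum (\<lambda>x. norm (?g x)) (?S1 n - ?S2 n)"
      by (rule norm_sum)
    also have "\<dots> \<le> sum ?f (?S1 n - ?S2 n)"
      by (intro sum_mono) (auto simp: K)
    also have "\<dots> = norm (sum ?f (?S1 n - ?S2 n))" by (simp only: norm_sum_f)
    finally show "norm (sum ?g (?S1 n - ?S2 n)) \<le> norm (sum ?f (?S1 n - ?S2 n))" .
  qed
  then have 2: "(\<lambda>n. sum ?g (?S1 n) - sum ?g (?S2 n)) \<longlonglongrightarrow> 0"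
    unfolding tendsto_Zfun_iff diff_0_right
    by (simp only: sum_diff finite_S1 S2_le_S1)
  with 1 have "(\<lambda>n. sum ?g (?S2 n)) \<longlonglongrightarrow> prod (\<Sum>k. a k) (\<Sum>k. b k)"
    by (rule Lim_transform2)
  then show ?thesis
    by (simp only: sums_def sum.triangle_reindex)
qed


section \<open>Square root of a positive operator\<close>

definition sq_s :: "('a::chilbert_space \<Rightarrow> 'a) \<Rightarrow> real" where
  "sq_s A = onorm A + 1"

definition sq_X :: "('a::chilbert_space \<Rightarrow> 'a) \<Rightarrow> 'a \<Rightarrow> 'a" where
  "sq_X A x = x - scaleR (1 / sq_s A) (A x)"

definition sq_B :: "('a::chilbert_space \<Rightarrow> 'a) \<Rightarrow> 'a \<Rightarrow> 'a" where
  "sq_B A x = (\<Sum>n. sqc n *\<^sub>R (sq_X A ^^ n) x)"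

definition sq_R :: "('a::chilbert_space \<Rightarrow> 'a) \<Rightarrow> 'a \<Rightarrow> 'a" where
  "sq_R A x = scaleR (sqrt (sq_s A)) (sq_B A x)"

lemma herm_compose: "herm S \<Longrightarrow> herm U \<Longrightarrow> (\<And>x. S (U x) = U (S x)) \<Longrightarrow> herm (S \<circ> U)"
  unfolding herm_def by (metis comp_apply)

context
  fixes A :: "'a::chilbert_space \<Rightarrow> 'a"
  assumes pos: "positive_op A"
begin

private lemma A_cbl: "cblinear A" using pos by (simp add: positive_op_def)

private lemma s_pos: "sq_s A > 0"
  using onorm_pos_le[OF cblinear_bl[OF A_cbl]] by (simp add: sq_s_def)

private lemma X_cbl: "cblinear (sq_X A)"
proof -
  have "cblinear (\<lambda>x. x - scaleR (1 / sq_s A) (A x))"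
  proof (rule cblinear_intro[where K="1 + onorm A / sq_s A"])
    fix x y show "x + y - scaleR (1 / sq_s A) (A (x + y)) = x - scaleR (1 / sq_s A) (A x) + (y - scaleR (1 / sq_s A) (A y))"
      by (simp add: cblinear_add[OF A_cbl] scaleR_add_right)
  next
    fix c x show "scaleC c x - scaleR (1 / sq_s A) (A (scaleC c x)) = scaleC c (x - scaleR (1 / sq_s A) (A x))"
      by (simp add: cblinear_scaleC[OF A_cbl] scaleC_diff_right scaleC_scaleR_commute)
  next
    fix x
    have "norm (x - scaleR (1 / sq_s A) (A x)) \<le> norm x + (1 / sq_s A) * norm (A x)"
      using s_pos by (metis norm_triangle_ineq4 norm_scaleR abs_of_pos divide_pos_pos zero_less_one)
    also have "\<dots> \<le> norm x + (1 / sq_s A) * (onorm A * norm x)"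
      using s_pos cblinear_onorm[OF A_cbl, of x] by (intro add_left_mono mult_left_mono) auto
    finally show "norm (x - scaleR (1 / sq_s A) (A x)) \<le> norm x * (1 + onorm A / sq_s A)"
      by (simp add: algebra_simps)
  qed
  then show ?thesis by (simp add: sq_X_def[abs_def])
qed

private lemma X_herm: "herm (sq_X A)"
  using hermD[OF positive_herm[OF pos]]
  unfolding herm_def sq_X_def by (simp add: cinner_diff_left cinner_diff_right cinner_scaleR_left cinner_scaleR_right)

private lemma X_bounds: "0 \<le> Re (cinner (sq_X A x) x)" "Re (cinner (sq_X A x) x) \<le> (norm x)\<^sup>2"
proof -
  have e: "Re (cinner (sq_X A x) x) = (norm x)\<^sup>2 - Re (cinner (A x) x) / sq_s A"
    by (simp add: sq_X_def cinner_diff_left cinner_scaleR_left Re_cinner_self)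
  have "Re (cinner (A x) x) \<le> cmod (cinner (A x) x)" by (rule complex_Re_le_cmod)
  also have "\<dots> \<le> norm (A x) * norm x" by (rule Cauchy_Schwarz_c)
  also have "\<dots> \<le> onorm A * norm x * norm x"
    by (intro mult_right_mono cblinear_onorm[OF A_cbl]) auto
  also have "\<dots> \<le> sq_s A * (norm x)\<^sup>2"
    by (simp add: sq_s_def power2_eq_square distrib_right mult.assoc)
  finally have "Re (cinner (A x) x) / sq_s A \<le> (norm x)\<^sup>2"
    using s_pos by (simp add: divide_le_eq mult.commute)
  then show "0 \<le> Re (cinner (sq_X A x) x)" using e by simp
  have "Re (cinner (A x) x) \<ge> 0" using pos by (simp add: positive_op_def)
  then show "Re (cinner (sq_X A x) x) \<le> (norm x)\<^sup>2" using e s_pos by simp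
qed

private lemma X_norm: "norm (sq_X A x) \<le> norm x"
  by (rule herm_norm_bound[OF X_cbl X_herm X_bounds])

private lemma Xn_cbl: "cblinear (sq_X A ^^ n)"
proof (induction n)
  case 0 then show ?case using cblinear_ident by (simp add: id_def)
next
  case (Suc n) then show ?case using cblinear_compose[OF X_cbl Suc.IH] by (simp add: o_def)
qed

private lemma Xn_herm: "herm (sq_X A ^^ n)"
proof (induction n)
  case 0 then show ?case by (simp add: herm_def)
next
  case (Suc n)
  then show ?case
    by (simp only: funpow.simps(2)) (intro herm_compose X_herm, auto simp: funpow_swap1)
qed

private lemma Xn_norm: "norm ((sq_X A ^^ n) x) \<le> norm x"
proof (induction n)
  case 0 then show ?case by simp
next
  case (Suc n) then show ?case using X_norm[of "(sq_X A ^^ n) x"] by simp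
qed

private lemma Xn_Re: "\<bar>Re (cinner ((sq_X A ^^ n) x) x)\<bar> \<le> (norm x)\<^sup>2"
proof -
  have "\<bar>Re (cinner ((sq_X A ^^ n) x) x)\<bar> \<le> cmod (cinner ((sq_X A ^^ n) x) x)" by (rule abs_Re_le_cmod)
  also have "\<dots> \<le> norm ((sq_X A ^^ n) x) * norm x" by (rule Cauchy_Schwarz_c)
  also have "\<dots> \<le> norm x * norm x" by (intro mult_right_mono Xn_norm) auto
  finally show ?thesis by (simp add: power2_eq_square)
qed

private lemma term_summable: "summable (\<lambda>n. sqc n *\<^sub>R (sq_X A ^^ n) x)"
proof (rule summable_norm_cancel, rule summable_comparison_test[OF _ summable_mult2[OF summable_abs_sqc, of "norm x"]])
  show "\<exists>N. \<forall>n\<ge>N. norm (norm (sqc n *\<^sub>R (sq_X A ^^ n) x)) \<le> \<bar>sqc n\<bar> * norm x"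
    by (auto intro!: mult_left_mono Xn_norm)
qed

private lemma term_abs_summable: "summable (\<lambda>n. norm (sqc n *\<^sub>R (sq_X A ^^ n) x))"
  by (rule summable_comparison_test[OF _ summable_mult2[OF summable_abs_sqc, of "norm x"]])
    (auto intro!: mult_left_mono Xn_norm)

private lemma B_add: "sq_B A (x + y) = sq_B A x + sq_B A y"
  unfolding sq_B_def
  by (simp add: suminf_add[OF term_summable term_summable] cblinear_add[OF Xn_cbl] scaleR_add_right)

private lemma B_scaleC: "sq_B A (scaleC c x) = scaleC c (sq_B A x)"
  unfolding sq_B_def
  by (simp add: bounded_linear.suminf[OF bounded_linear_scaleC term_summable]
      cblinear_scaleC[OF Xn_cbl] scaleC_scaleR_commute)

private lemma B_norm: "norm (sq_B A x) \<le> norm x * (\<Sum>n. \<bar>sqc n\<bar>)"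
proof -
  have "norm (sq_B A x) \<le> (\<Sum>n. norm (sqc n *\<^sub>R (sq_X A ^^ n) x))"
    unfolding sq_B_def by (rule summable_norm[OF term_abs_summable])
  also have "\<dots> \<le> (\<Sum>n. \<bar>sqc n\<bar> * norm x)"
    by (intro suminf_le term_abs_summable summable_mult2[OF summable_abs_sqc])
      (auto intro!: mult_left_mono Xn_norm)
  also have "\<dots> = norm x * (\<Sum>n. \<bar>sqc n\<bar>)"
    using suminf_mult2[OF summable_abs_sqc, of "norm x"] by (simp add: mult.commute)
  finally show ?thesis .
qed

private lemma B_cbl: "cblinear (sq_B A)"
  by (rule cblinear_intro[OF B_add B_scaleC B_norm])

private lemma B_commute:
  assumes C: "cblinear C" and CA: "\<And>x. C (A x) = A (C x)"
  shows "C (sq_B A x) = sq_B A (C x)"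
proof -
  have CX: "C (sq_X A x) = sq_X A (C x)" for x
    by (simp add: sq_X_def cblinear_diff[OF C] cblinear_scaleR[OF C] CA)
  have CXn: "C ((sq_X A ^^ n) x) = (sq_X A ^^ n) (C x)" for n x
    by (induction n) (auto simp: CX)
  show ?thesis
    unfolding sq_B_def
    by (simp add: bounded_linear.suminf[OF cblinear_bl[OF C] term_summable] cblinear_scaleR[OF C] CXn)
qed

private lemma B_square: "sq_B A (sq_B A x) = x - sq_X A x"
proof -
  define F where "F k = Blinfun (sq_X A ^^ k)" for k
  have F: "blinfun_apply (F k) = (sq_X A ^^ k)" for k
    unfolding F_def by (rule bounded_linear_Blinfun_apply[OF cblinear_bl[OF Xn_cbl]])
  have nF: "norm (F k) \<le> 1" for k
    by (rule norm_blinfun_bound) (auto simp: F Xn_norm)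
  define a where "a k = sqc k *\<^sub>R F k" for k
  define b where "b k = sqc k *\<^sub>R (sq_X A ^^ k) x" for k
  have sa: "summable (\<lambda>k. norm (a k))"
    by (rule summable_comparison_test[OF _ summable_abs_sqc])
      (auto simp: a_def intro!: mult_left_le nF)
  have sb: "summable (\<lambda>k. norm (b k))" unfolding b_def by (rule term_abs_summable)
  have cp: "(\<lambda>k. \<Sum>i\<le>k. blinfun_apply (a i) (b (k - i))) sums blinfun_apply (\<Sum>k. a k) (\<Sum>k. b k)"
    by (rule bb_Cauchy_product_sums[OF bounded_bilinear_blinfun_apply sa sb])
  have ev: "blinfun_apply (\<Sum>k. a k) v = sq_B A v" for v
  proof -
    have "blinfun_apply (\<Sum>k. a k) v = (\<Sum>k. blinfun_apply (a k) v)"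
      by (rule bounded_linear.suminf[OF bounded_bilinear.bounded_linear_left[OF bounded_bilinear_blinfun_apply]
            summable_norm_cancel[OF sa]])
    then show ?thesis by (simp add: a_def F sq_B_def blinfun.scaleR_left)
  qed
  have sbx: "(\<Sum>k. b k) = sq_B A x" by (simp add: b_def sq_B_def)
  have trm: "(\<Sum>i\<le>k. blinfun_apply (a i) (b (k - i)))
      = (if k = 0 then x else if k = 1 then - sq_X A x else 0)" for k
  proof -
    have "(\<Sum>i\<le>k. blinfun_apply (a i) (b (k - i))) = (\<Sum>i\<le>k. (sqc i * sqc (k - i)) *\<^sub>R (sq_X A ^^ k) x)"
    proof (intro sum.cong refl)
      fix i assume "i \<in> {..k}"
      then have ik: "i + (k - i) = k" by simp
      have "(sq_X A ^^ (i + (k - i))) x = (sq_X A ^^ i) ((sq_X A ^^ (k - i)) x)"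
        by (simp only: funpow_add comp_apply)
      then have "(sq_X A ^^ i) ((sq_X A ^^ (k - i)) x) = (sq_X A ^^ k) x"
        by (simp only: ik)
      then show "blinfun_apply (a i) (b (k - i)) = (sqc i * sqc (k - i)) *\<^sub>R (sq_X A ^^ k) x"
        by (simp add: a_def b_def F blinfun.scaleR_left cblinear_scaleR[OF Xn_cbl])
    qed
    also have "\<dots> = (\<Sum>i\<le>k. sqc i * sqc (k - i)) *\<^sub>R (sq_X A ^^ k) x"
      by (simp add: scaleR_sum_left)
    also have "\<dots> = (if k = 0 then x else if k = 1 then - sq_X A x else 0)"
      by (simp add: sqc_cauchy)
    finally show ?thesis .
  qed
  define g where "g k = (if k = 0 then x else if k = 1 then - sq_X A x else 0)" for k :: nat
  have "g sums (\<Sum>k\<in>{0,1}. g k)"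
    by (rule sums_finite) (auto simp: g_def)
  then have "(\<lambda>k. if k = 0 then x else if k = 1 then - sq_X A x else 0) sums (x - sq_X A x)"
    by (simp add: g_def[abs_def])
  then have "(\<lambda>k. \<Sum>i\<le>k. blinfun_apply (a i) (b (k - i))) sums (x - sq_X A x)"
    by (simp add: trm)
  with cp have "blinfun_apply (\<Sum>k. a k) (\<Sum>k. b k) = x - sq_X A x"
    using sums_unique2 by blast
  then show ?thesis by (simp add: ev sbx)
qed

private lemma B_Im: "Im (cinner (sq_B A x) x) = 0"
proof -
  have "cinner (sq_B A x) x = (\<Sum>n. cinner (sqc n *\<^sub>R (sq_X A ^^ n) x) x)"
    unfolding sq_B_def by (rule bounded_linear.suminf[OF bounded_linear_cinner_left term_summable])
  moreover have s2: "summable (\<lambda>n. cinner (sqc n *\<^sub>R (sq_X A ^^ n) x) x)"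
    by (rule bounded_linear.summable[OF bounded_linear_cinner_left term_summable])
  ultimately have "Im (cinner (sq_B A x) x) = (\<Sum>n. Im (cinner (sqc n *\<^sub>R (sq_X A ^^ n) x) x))"
    by (simp add: bounded_linear.suminf[OF bounded_linear_Im s2])
  also have "\<dots> = 0"
    using herm_Im[OF Xn_herm] by (simp add: cinner_scaleR_left)
  finally show ?thesis .
qed

private lemma B_Re: "Re (cinner (sq_B A x) x) \<ge> 0"
proof -
  define r where "r n = Re (cinner ((sq_X A ^^ n) x) x)" for n
  have "cinner (sq_B A x) x = (\<Sum>n. cinner (sqc n *\<^sub>R (sq_X A ^^ n) x) x)"
    unfolding sq_B_def by (rule bounded_linear.suminf[OF bounded_linear_cinner_left term_summable])
  moreover have s2: "summable (\<lambda>n. cinner (sqc n *\<^sub>R (sq_X A ^^ n) x) x)"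
    by (rule bounded_linear.summable[OF bounded_linear_cinner_left term_summable])
  ultimately have "Re (cinner (sq_B A x) x) = (\<Sum>n. Re (cinner (sqc n *\<^sub>R (sq_X A ^^ n) x) x))"
    by (simp add: bounded_linear.suminf[OF bounded_linear_Re s2])
  also have "\<dots> = (\<Sum>n. sqc n * r n)"
    by (simp add: cinner_scaleR_left r_def)
  finally have e: "Re (cinner (sq_B A x) x) = (\<Sum>n. sqc n * r n)" .
  have sr: "summable (\<lambda>n. sqc n * r n)"
  proof (rule summable_comparison_test[OF _ summable_mult2[OF summable_abs_sqc, of "(norm x)\<^sup>2"]])
    have "norm (sqc n * r n) \<le> \<bar>sqc n\<bar> * (norm x)\<^sup>2" for n
    proof -
      have "norm (sqc n * r n) = \<bar>sqc n\<bar> * \<bar>r n\<bar>" by (simp add: abs_mult)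
      also have "\<dots> \<le> \<bar>sqc n\<bar> * (norm x)\<^sup>2"
        unfolding r_def by (intro mult_left_mono Xn_Re abs_ge_zero)
      finally show ?thesis .
    qed
    then show "\<exists>N. \<forall>n\<ge>N. norm (sqc n * r n) \<le> \<bar>sqc n\<bar> * (norm x)\<^sup>2" by blast
  qed
  have head: "(\<Sum>n. sqc n * r n) = sqc 0 * r 0 + (\<Sum>n. sqc (Suc n) * r (Suc n))"
    using suminf_split_head[OF sr] by linarith
  have r0: "r 0 = (norm x)\<^sup>2" by (simp add: r_def Re_cinner_self)
  have stail: "summable (\<lambda>n. sqc (Suc n))"
    using summable_rabs_cancel[OF summable_sqc_tail] .
  have "(\<Sum>n. sqc (Suc n) * (norm x)\<^sup>2) \<le> (\<Sum>n. sqc (Suc n) * r (Suc n))"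
  proof (rule suminf_le)
    fix n
    have "r (Suc n) \<le> (norm x)\<^sup>2" unfolding r_def by (rule abs_le_D1[OF Xn_Re])
    then show "sqc (Suc n) * (norm x)\<^sup>2 \<le> sqc (Suc n) * r (Suc n)"
      using sqc_Suc_nonpos[of n] by (intro mult_left_mono_neg)
  next
    show "summable (\<lambda>n. sqc (Suc n) * (norm x)\<^sup>2)" by (rule summable_mult2[OF stail])
    show "summable (\<lambda>n. sqc (Suc n) * r (Suc n))" using summable_Suc_iff[where f="\<lambda>n. sqc n * r n"] sr by simp
  qed
  moreover have "(\<Sum>n. sqc (Suc n) * (norm x)\<^sup>2) = (\<Sum>n. sqc (Suc n)) * (norm x)\<^sup>2"
    using suminf_mult2[OF stail] by simp
  moreover have "(\<Sum>n. sqc (Suc n)) * (norm x)\<^sup>2 \<ge> - (norm x)\<^sup>2"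
  proof -
    have "(-1) * (norm x)\<^sup>2 \<le> (\<Sum>n. sqc (Suc n)) * (norm x)\<^sup>2"
      using suminf_sqc_tail by (intro mult_right_mono) auto
    then show ?thesis by simp
  qed
  ultimately show ?thesis using e head r0 by (simp only: sqc_0 mult_1)
qed

lemma sq_R_positive: "positive_op (sq_R A)"
proof -
  have "cblinear (\<lambda>x. sqrt (sq_s A) *\<^sub>R sq_B A x)"
  proof (rule cblinear_intro[where K="sqrt (sq_s A) * (\<Sum>n. \<bar>sqc n\<bar>)"])
    fix x y show "sqrt (sq_s A) *\<^sub>R sq_B A (x + y) = sqrt (sq_s A) *\<^sub>R sq_B A x + sqrt (sq_s A) *\<^sub>R sq_B A y"
      by (simp only: B_add scaleR_add_right)
  next
    fix c x show "sqrt (sq_s A) *\<^sub>R sq_B A (scaleC c x) = scaleC c (sqrt (sq_s A) *\<^sub>R sq_B A x)"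
      by (simp only: B_scaleC scaleC_scaleR_commute)
  next
    fix x
    have "norm (sqrt (sq_s A) *\<^sub>R sq_B A x) = sqrt (sq_s A) * norm (sq_B A x)"
      using less_imp_le[OF s_pos] by simp
    also have "\<dots> \<le> sqrt (sq_s A) * (norm x * (\<Sum>n. \<bar>sqc n\<bar>))"
      using less_imp_le[OF s_pos] by (intro mult_left_mono B_norm) auto
    finally show "norm (sqrt (sq_s A) *\<^sub>R sq_B A x) \<le> norm x * (sqrt (sq_s A) * (\<Sum>n. \<bar>sqc n\<bar>))"
      by (simp only: mult.commute mult.left_commute)
  qed
  then have "cblinear (sq_R A)" by (simp add: sq_R_def[abs_def])
  moreover have "Re (cinner (sq_R A x) x) \<ge> 0" "Im (cinner (sq_R A x) x) = 0" for x
    using B_Re[of x] B_Im[of x] less_imp_le[OF s_pos] by (auto simp: sq_R_def cinner_scaleR_left)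
  ultimately show ?thesis by (simp add: positive_op_def)
qed

lemma sq_R_square: "sq_R A (sq_R A x) = A x"
proof -
  have "sq_R A (sq_R A x) = sq_s A *\<^sub>R sq_B A (sq_B A x)"
    using s_pos by (simp add: sq_R_def cblinear_scaleR[OF B_cbl])
  also have "\<dots> = A x"
    using s_pos by (simp add: B_square sq_X_def)
  finally show ?thesis .
qed

lemma sq_R_commute:
  assumes C: "cblinear C" and CA: "\<And>x. C (A x) = A (C x)"
  shows "C (sq_R A x) = sq_R A (C x)"
  by (simp add: sq_R_def cblinear_scaleR[OF C] B_commute[OF C CA])

lemma sq_R_unique:
  assumes Cpos: "positive_op C" and CC: "C \<circ> C = A"
  shows "C = sq_R A"
proof
  fix x
  have C: "cblinear C" using Cpos by (simp add: positive_op_def)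
  have CCx: "C (C x) = A x" for x using CC by (metis comp_apply)
  have CA: "C (A x) = A (C x)" for x by (simp add: CCx[symmetric])
  have CR: "C (sq_R A x) = sq_R A (C x)" for x by (rule sq_R_commute[OF C CA])
  have Rpos: "positive_op (sq_R A)" by (rule sq_R_positive)
  have R: "cblinear (sq_R A)" using Rpos by (simp add: positive_op_def)
  define D where "D x = sq_R A x - C x" for x
  have Dy: "sq_R A (D x) = 0 \<and> C (D x) = 0" for x
  proof -
    define y where "y = D x"
    have "sq_R A y + C y = 0"
      by (simp add: y_def D_def cblinear_diff[OF R] cblinear_diff[OF C] sq_R_square CCx CR)
    then have "Re (cinner (sq_R A y) y) + Re (cinner (C y) y) = 0"
      by (metis cinner_add_left cinner_zero_left plus_complex.sel(1) zero_complex.sel(1))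
    moreover have "Re (cinner (sq_R A y) y) \<ge> 0" "Re (cinner (C y) y) \<ge> 0"
      using Rpos Cpos by (auto simp: positive_op_def)
    ultimately have "Re (cinner (sq_R A y) y) = 0" "Re (cinner (C y) y) = 0" by linarith+
    then show ?thesis using positive_zero[OF Rpos] positive_zero[OF Cpos] by (simp add: y_def)
  qed
  have "cinner (D x) (D x) = cinner x (sq_R A (D x)) - cinner x (C (D x))"
    using hermD[OF positive_herm[OF Rpos]] hermD[OF positive_herm[OF Cpos]]
    by (simp add: D_def[of x] cinner_diff_left)
  also have "\<dots> = 0" using Dy by simp
  finally have "D x = 0" by (simp add: cinner_self_eq_0)
  then show "C x = sq_R A x" by (simp add: D_def)
qed

lemma op_sqrt_eq: "op_sqrt A = sq_R A"
  unfolding op_sqrt_def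
proof (rule the_equality)
  show "positive_op (sq_R A) \<and> sq_R A \<circ> sq_R A = A"
    using sq_R_positive sq_R_square by (auto simp: fun_eq_iff)
  show "\<And>C. positive_op C \<and> C \<circ> C = A \<Longrightarrow> C = sq_R A"
    using sq_R_unique by blast
qed

end

lemma op_sqrt_positive: "positive_op A \<Longrightarrow> positive_op (op_sqrt A)"
  by (simp add: op_sqrt_eq sq_R_positive)

lemma op_sqrt_square: "positive_op A \<Longrightarrow> op_sqrt A (op_sqrt A x) = A x"
  by (simp add: op_sqrt_eq sq_R_square)


locale msetting =
  fixes A :: "'a::chilbert_space \<Rightarrow> 'a"
  assumes pos: "positive_op A"
begin

abbreviation "R \<equiv> op_sqrt A"
abbreviation "M \<equiv> closure (range A)"
abbreviation "P \<equiv> projP A"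

lemma Rpos: "positive_op R" by (rule op_sqrt_positive[OF pos])
lemma Rc: "cblinear R" using Rpos by (simp add: positive_op_def)
lemma Rherm: "cinner (R x) y = cinner x (R y)" using hermD[OF positive_herm[OF Rpos]] .
lemma RR: "R (R x) = A x" by (rule op_sqrt_square[OF pos])
lemma Ac: "cblinear A" using pos by (simp add: positive_op_def)
lemma Aherm: "cinner (A x) y = cinner x (A y)" using hermD[OF positive_herm[OF pos]] .

lemma M_closed_csub: "closed_csub M"
  by unfold_locales (auto intro: csubspace_closure cblinear_csubspace_range Ac)

sublocale Mc: closed_csub M by (rule M_closed_csub)

lemma P_def': "P = orth_proj M" by (simp add: projP_def)

lemma P_in: "P x \<in> M" by (simp add: P_def' Mc.proj_in)
lemma P_orth: "m \<in> M \<Longrightarrow> cinner (x - P x) m = 0" by (simp add: P_def' Mc.proj_orth)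
lemma P_id: "m \<in> M \<Longrightarrow> P m = m" by (simp add: P_def' Mc.proj_id)
lemma P_idem: "P (P x) = P x" by (simp add: P_def' Mc.proj_idem)
lemma Pc: "cblinear P" by (simp add: P_def' Mc.cblinear_proj)
lemma P_selfadj: "cinner (P x) y = cinner x (P y)" by (simp add: P_def' Mc.proj_selfadj)
lemma P_norm: "norm (P x) \<le> norm x" by (simp add: P_def' Mc.norm_proj_le)

lemma kerAR: "A z = 0 \<longleftrightarrow> R z = 0"
proof
  assume "A z = 0"
  then have "cinner (R z) (R z) = 0" by (simp add: Rherm RR)
  then show "R z = 0" by (simp add: cinner_self_eq_0)
next
  assume "R z = 0" then show "A z = 0" using RR[of z] cblinear_zero[OF Rc] by simp
qed

lemma perp_iff: "(\<forall>m\<in>M. cinner z m = 0) \<longleftrightarrow> A z = 0"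
proof
  assume h: "\<forall>m\<in>M. cinner z m = 0"
  have "A (A z) \<in> M" by (rule subsetD[OF closure_subset]) simp
  then have "cinner z (A (A z)) = 0"
    using h by blast
  then have "cinner (A z) (A z) = 0" by (simp add: Aherm)
  then show "A z = 0" by (simp add: cinner_self_eq_0)
next
  assume h: "A z = 0"
  have "range A \<subseteq> {m. cinner z m = 0}"
  proof
    fix m assume "m \<in> range A"
    then obtain y where "m = A y" by blast
    then show "m \<in> {m. cinner z m = 0}" using Aherm[of z y] h by simp
  qed
  moreover have "closed {m. cinner z m = 0}"
    by (intro closed_Collect_eq continuous_intros)
  ultimately have "M \<subseteq> {m. cinner z m = 0}" by (rule closure_minimal)
  then show "\<forall>m\<in>M. cinner z m = 0" by blast
qed

lemma R_diff_P: "R (x - P x) = 0"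
proof -
  have "\<forall>m\<in>M. cinner (x - P x) m = 0" using P_orth by blast
  then have "A (x - P x) = 0" by (rule perp_iff[THEN iffD1])
  then show ?thesis by (rule kerAR[THEN iffD1])
qed

lemma RP: "R (P x) = R x"
  using R_diff_P[of x] by (simp add: cblinear_diff[OF Rc])

lemma AP: "A (P x) = A x"
  by (metis RP RR)

lemma R_in_M: "R x \<in> M"
proof -
  define w where "w = R x - P (R x)"
  have "\<forall>m\<in>M. cinner w m = 0" using P_orth w_def by blast
  then have "A w = 0" by (rule perp_iff[THEN iffD1])
  then have Rw: "R w = 0" by (rule kerAR[THEN iffD1])
  have "cinner w (P (R x)) = 0" using P_orth[OF P_in] w_def by blast
  then have "cinner (P (R x)) w = 0" by (subst cinner_cnj) simp
  moreover have "cinner (R x) w = 0" by (simp add: Rherm Rw)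
  ultimately have "cinner w w = 0" by (simp add: w_def cinner_diff_left)
  then have "w = 0" by (simp add: cinner_self_eq_0)
  then have "R x = P (R x)" by (simp add: w_def)
  then show ?thesis using P_in by metis
qed

lemma closure_range_R: "closure (range R) = M"
proof
  show "closure (range R) \<subseteq> M"
    by (rule closure_minimal) (auto simp: R_in_M)
  have "range A \<subseteq> range R" by (auto simp: RR[symmetric])
  then show "M \<subseteq> closure (range R)" by (rule closure_mono)
qed

lemma M_inj: "m \<in> M \<Longrightarrow> R m = 0 \<Longrightarrow> m = 0"
proof -
  assume m: "m \<in> M" "R m = 0"
  have "A m = 0" by (rule kerAR[THEN iffD2, OF m(2)])
  then have "\<forall>m'\<in>M. cinner m m' = 0" by (rule perp_iff[THEN iffD2])
  then have "cinner m m = 0" using m(1) by blast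
  then show "m = 0" by (simp add: cinner_self_eq_0)
qed

lemma M_inj2: "m1 \<in> M \<Longrightarrow> m2 \<in> M \<Longrightarrow> R m1 = R m2 \<Longrightarrow> m1 = m2"
  using M_inj[of "m1 - m2"] csubspace_diff[OF Mc.csub_M] cblinear_diff[OF Rc] by auto

lemma P_eq_of_R: "R x = R y \<Longrightarrow> P x = P y"
  using M_inj2[OF P_in P_in] RP by metis

lemma density:
  assumes v: "v \<in> M" and c: "c \<ge> 0" and h: "\<And>x. cmod (cinner (R x) v) \<le> c * norm (R x)"
  shows "norm v \<le> c"
proof -
  have "v \<in> closure (range R)" using v closure_range_R by simp
  then obtain u where u: "\<And>n. u n \<in> range R" "u \<longlonglongrightarrow> v"
    by (meson closure_sequential)
  have hu: "cmod (cinner (u n) v) \<le> c * norm (u n)" for n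
    using u(1)[of n] h by auto
  have l1: "(\<lambda>n. cmod (cinner (u n) v)) \<longlonglongrightarrow> cmod (cinner v v)"
    by (intro tendsto_intros u(2))
  have l2: "(\<lambda>n. c * norm (u n)) \<longlonglongrightarrow> c * norm v"
    by (intro tendsto_intros u(2))
  have "cmod (cinner v v) \<le> c * norm v"
    by (rule tendsto_le[OF trivial_limit_sequentially l2 l1]) (simp add: hu)
  then have "norm v * norm v \<le> c * norm v" by (simp add: cmod_cinner_self power2_eq_square)
  then show ?thesis
    by (cases "norm v = 0") (use c in auto)
qed


lemma diamond_char:
  assumes S: "cblinear S" and D: "cblinear D"
    and SD: "\<And>x. adjoint S (R x) = R (D x)" and DM: "\<And>x. D x \<in> M"
  shows "diamond A S = D"
  unfolding diamond_def
proof (rule the_equality)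
  show "cblinear D \<and> adjoint S \<circ> R = R \<circ> D \<and> range D \<subseteq> closure (range R)"
    using D SD DM closure_range_R by (auto simp: fun_eq_iff)
  fix D' assume h: "cblinear D' \<and> adjoint S \<circ> R = R \<circ> D' \<and> range D' \<subseteq> closure (range R)"
  show "D' = D"
  proof
    fix x
    have "D' x \<in> M" using h closure_range_R by auto
    moreover have "R (D' x) = R (D x)" using h SD by (metis comp_apply)
    ultimately show "D' x = D x" using M_inj2 DM by blast
  qed
qed

lemma A_norm_eq: "A_norm A y = norm (R y)"
proof -
  have "cinner (R (R y)) y = cinner (R y) (R y)" by (rule Rherm)
  then have "Re (cinner (A y) y) = (norm (R y))\<^sup>2"
    by (simp add: RR Re_cinner_self)
  then show ?thesis by (simp add: A_norm_def)
qed

lemma RA_norm_R: "RA_norm A (R y) = norm (P y)"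
proof -
  have "\<exists>x. R x = R y" by blast
  then have "R (SOME x. R x = R y) = R y" by (rule someI_ex)
  then show ?thesis unfolding RA_norm_def by (metis P_eq_of_R)
qed

end

locale tsetting = msetting +
  fixes T :: "'a \<Rightarrow> 'a"
  assumes TB: "T \<in> BA_half A"
begin

abbreviation "Ts \<equiv> adjoint T"

lemma Tc: "cblinear T" using TB by (simp add: BA_half_def)
lemma Tsc: "cblinear Ts" by (rule adjoint_prop(1)[OF Tc])
lemma Tadj: "cinner (T x) y = cinner x (Ts y)" by (rule adjoint_prop(2)[OF Tc])

lemma TsR: "\<exists>y. Ts (R x) = R y"
proof -
  have "(Ts \<circ> R) x \<in> range R" using TB by (auto simp: BA_half_def)
  then show ?thesis by (auto simp: image_iff)
qed

lemma Tker: "R z = 0 \<Longrightarrow> R (T z) = 0"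
proof -
  assume z: "R z = 0"
  have "cinner (R (T z)) w = 0" for w
  proof -
    obtain y where y: "Ts (R w) = R y" using TsR by blast
    have "cinner (R (T z)) w = cinner z (Ts (R w))" by (simp add: Rherm Tadj)
    also have "\<dots> = cinner (R z) y" by (simp add: y Rherm)
    also have "\<dots> = 0" by (simp add: z)
    finally show ?thesis .
  qed
  then show ?thesis using cinner_ext[of "R (T z)" 0] by simp
qed

lemma RTP: "R (T (P x)) = R (T x)"
proof -
  have "R (T (x - P x)) = 0" by (rule Tker[OF R_diff_P])
  then show ?thesis by (simp add: cblinear_diff[OF Tc] cblinear_diff[OF Rc])
qed

lemma PTP: "P (T (P x)) = P (T x)"
  by (rule P_eq_of_R[OF RTP])

definition Dop :: "'a \<Rightarrow> 'a" where
  "Dop x = P (SOME y. R y = Ts (R x))"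

lemma RD: "R (Dop x) = Ts (R x)"
proof -
  obtain y where "Ts (R x) = R y" using TsR by blast
  then have "\<exists>y. R y = Ts (R x)" by metis
  then have "R (SOME y. R y = Ts (R x)) = Ts (R x)" by (rule someI_ex)
  then show ?thesis by (simp add: Dop_def RP)
qed

lemma DM: "Dop x \<in> M" by (simp add: Dop_def P_in)

lemma Duniq: "m \<in> M \<Longrightarrow> R m = Ts (R x) \<Longrightarrow> Dop x = m"
proof -
  assume m: "m \<in> M" "R m = Ts (R x)"
  show "Dop x = m" using M_inj2[OF DM[of x] m(1)] RD[of x] m(2) by simp
qed

lemma D_add: "Dop (x + y) = Dop x + Dop y"
  by (rule Duniq) (auto simp: csubspace_add[OF Mc.csub_M DM DM] cblinear_add[OF Rc] cblinear_add[OF Tsc] RD)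

lemma D_scaleC: "Dop (scaleC c x) = scaleC c (Dop x)"
  by (rule Duniq) (auto simp: csubspace_scaleC[OF Mc.csub_M DM] cblinear_scaleC[OF Rc] cblinear_scaleC[OF Tsc] RD)

lemma D_scaleR: "Dop (scaleR r x) = scaleR r (Dop x)"
  using D_scaleC[of "complex_of_real r" x] by (simp add: scaleC_of_real)

lemma D_zero: "Dop 0 = 0"
  using D_scaleR[of 0 0] by simp

lemma D_diff: "Dop (x - y) = Dop x - Dop y"
  using D_add[of "x - y" y] by simp

lemma Dkey: "cinner (Dop x) (R w) = cinner x (R (T w))"
proof -
  have "cinner (Dop x) (R w) = cinner (Ts (R x)) w" by (simp add: Rherm[symmetric] RD)
  also have "\<dots> = cnj (cinner w (Ts (R x)))" by (rule cinner_cnj)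
  also have "\<dots> = cnj (cinner (T w) (R x))" by (simp add: Tadj)
  also have "\<dots> = cinner (R x) (T w)" by (simp add: cinner_cnj[of "R x" "T w"])
  also have "\<dots> = cinner x (R (T w))" by (simp add: Rherm)
  finally show ?thesis .
qed

definition Fset :: "nat \<Rightarrow> 'a set" where
  "Fset n = {x. \<forall>w. cmod (cinner x (R (T w))) \<le> real n * norm (R w)}"

lemma Fset_closed: "closed (Fset n)"
  unfolding Fset_def
  by (intro closed_Collect_all closed_Collect_le continuous_intros)

lemma Fset_bound: "x \<in> Fset n \<Longrightarrow> norm (Dop x) \<le> real n"
proof -
  assume x: "x \<in> Fset n"
  show ?thesis
  proof (rule density[OF DM])
    fix w
    have "cmod (cinner (R w) (Dop x)) = cmod (cinner (Dop x) (R w))"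
      by (subst cinner_cnj) (simp only: complex_mod_cnj)
    also have "\<dots> = cmod (cinner x (R (T w)))" by (simp add: Dkey)
    also have "\<dots> \<le> real n * norm (R w)" using x by (simp add: Fset_def)
    finally show "cmod (cinner (R w) (Dop x)) \<le> real n * norm (R w)" .
  qed simp
qed

lemma Fset_cover: "x \<in> Fset (nat \<lceil>norm (Dop x)\<rceil>)"
  unfolding Fset_def
proof (intro CollectI allI)
  fix w
  have "cmod (cinner x (R (T w))) = cmod (cinner (Dop x) (R w))" by (simp add: Dkey)
  also have "\<dots> \<le> norm (Dop x) * norm (R w)" by (rule Cauchy_Schwarz_c)
  also have "\<dots> \<le> real (nat \<lceil>norm (Dop x)\<rceil>) * norm (R w)"
    by (intro mult_right_mono) (auto simp: real_nat_ceiling_ge)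
  finally show "cmod (cinner x (R (T w))) \<le> real (nat \<lceil>norm (Dop x)\<rceil>) * norm (R w)" .
qed

lemma Fset_interior: "\<exists>n. interior (Fset n) \<noteq> {}"
proof (rule ccontr)
  assume h: "\<not> (\<exists>n. interior (Fset n) \<noteq> {})"
  have "euclidean interior_of \<Union>(range Fset) = {}"
  proof (rule Baire_category_alt)
    show "completely_metrizable_space (euclidean :: 'a topology) \<or>
        locally_compact_space (euclidean :: 'a topology) \<and> regular_space (euclidean :: 'a topology)"
      using completely_metrizable_space_euclidean by blast
    show "countable (range Fset)" by simp
    fix S assume "S \<in> range Fset"
    then obtain n where "S = Fset n" by blast
    then show "closedin euclidean S \<and> euclidean interior_of S = {}"
      using Fset_closed h by (simp add: closed_closedin[symmetric])
  qed
  moreover have "\<Union>(range Fset) = UNIV" using Fset_cover by blast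
  ultimately show False by simp
qed

lemma D_bounded: "\<exists>K. \<forall>x. norm (Dop x) \<le> norm x * K"
proof -
  obtain n where "interior (Fset n) \<noteq> {}" using Fset_interior by blast
  then obtain x0 where x0: "x0 \<in> interior (Fset n)" by blast
  then obtain r where r: "r > 0" "ball x0 r \<subseteq> interior (Fset n)"
    using open_contains_ball[of "interior (Fset n)"] by blast
  have small: "norm (Dop u) \<le> 2 * real n" if "norm u < r" for u
  proof -
    have "x0 + u \<in> ball x0 r" using that by (simp add: dist_norm)
    then have "x0 + u \<in> Fset n" using r interior_subset by blast
    then have 1: "norm (Dop (x0 + u)) \<le> real n" by (rule Fset_bound)
    have "x0 \<in> Fset n" using x0 interior_subset by blast
    then have 2: "norm (Dop x0) \<le> real n" by (rule Fset_bound)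
    have "Dop u = Dop (x0 + u) - Dop x0" by (simp add: D_add)
    then have "norm (Dop u) \<le> norm (Dop (x0 + u)) + norm (Dop x0)"
      by (metis norm_triangle_ineq4)
    then show ?thesis using 1 2 by simp
  qed
  have "norm (Dop x) \<le> norm x * (4 * real n / r)" for x
  proof (cases "x = 0")
    case True then show ?thesis by (simp add: D_zero)
  next
    case False
    then have nx: "norm x > 0" by simp
    define u where "u = scaleR (r / (2 * norm x)) x"
    have "norm u = r / 2" using nx r by (simp add: u_def)
    then have "norm u < r" using r by simp
    then have "norm (Dop u) \<le> 2 * real n" by (rule small)
    moreover have "norm (Dop u) = r / (2 * norm x) * norm (Dop x)"
      using nx r by (simp add: u_def D_scaleR)
    ultimately have "r / (2 * norm x) * norm (Dop x) \<le> 2 * real n" by simp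
    then show ?thesis using nx r by (simp add: field_simps)
  qed
  then show ?thesis by blast
qed

lemma Dc: "cblinear Dop"
proof -
  obtain K where "\<And>x. norm (Dop x) \<le> norm x * K" using D_bounded by blast
  then show ?thesis by (intro cblinear_intro[where K=K] D_add D_scaleC)
qed

lemma diamond_T: "diamond A T = Dop"
  by (rule diamond_char[OF Tc Dc]) (simp_all add: RD DM)


abbreviation "Ds \<equiv> adjoint Dop"

lemma Dadj: "cinner (Dop x) y = cinner x (Ds y)" by (rule adjoint_prop(2)[OF Dc])

lemma DsR: "Ds (R w) = R (T w)"
  by (rule cinner_ext_right) (simp add: Dadj[symmetric] Dkey)

lemma D_BA: "Dop \<in> BA_half A"
  unfolding BA_half_def using Dc DsR by auto

definition Eop :: "'a \<Rightarrow> 'a" where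
  "Eop x = P (T (P x))"

lemma Ec: "cblinear Eop"
  using cblinear_compose[OF Pc cblinear_compose[OF Tc Pc]] by (simp add: Eop_def[abs_def] o_def)

lemma E_eq: "Eop x = P (T x)" by (simp add: Eop_def PTP)

lemma E_P: "Eop (P x) = Eop x" by (simp add: Eop_def P_idem)

lemma EM: "Eop x \<in> M" by (simp add: Eop_def P_in)

lemma DsRE: "Ds (R x) = R (Eop x)"
  by (simp add: DsR E_eq RP)

lemma diamond_D: "diamond A Dop = Eop"
  by (rule diamond_char[OF Dc Ec]) (simp_all add: DsRE EM)

lemma key2: "cinner (R (Dop x)) w = cinner (R x) (Eop w)"
proof -
  have "cinner (R (Dop x)) w = cinner (Dop x) (R w)" by (rule Rherm)
  also have "\<dots> = cinner x (R (T w))" by (rule Dkey)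
  also have "\<dots> = cinner (R x) (T w)" by (rule Rherm[symmetric])
  also have "\<dots> = cinner (P (R x)) (T w)" by (simp add: P_id[OF R_in_M])
  also have "\<dots> = cinner (R x) (P (T w))" by (rule P_selfadj)
  also have "\<dots> = cinner (R x) (Eop w)" by (simp add: E_eq)
  finally show ?thesis .
qed

abbreviation "N \<equiv> onorm Eop"

lemma E_bound: "norm (Eop x) \<le> N * norm x" by (rule cblinear_onorm[OF Ec])

lemma N_nonneg: "N \<ge> 0" by (rule onorm_pos_le[OF cblinear_bl[OF Ec]])

lemma RD_bound: "norm (R (Dop x)) \<le> N * norm (R x)"
proof -
  have "(norm (R (Dop x)))\<^sup>2 = cmod (cinner (R (Dop x)) (R (Dop x)))" by (simp add: cmod_cinner_self)
  also have "\<dots> = cmod (cinner (R x) (Eop (R (Dop x))))" by (simp add: key2)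
  also have "\<dots> \<le> norm (R x) * norm (Eop (R (Dop x)))" by (rule Cauchy_Schwarz_c)
  also have "\<dots> \<le> norm (R x) * (N * norm (R (Dop x)))" by (intro mult_left_mono E_bound) auto
  finally have "norm (R (Dop x)) * norm (R (Dop x)) \<le> (N * norm (R x)) * norm (R (Dop x))"
    by (simp add: power2_eq_square algebra_simps)
  then show ?thesis
    by (cases "norm (R (Dop x)) = 0") (use N_nonneg in auto)
qed

lemma Tb_val: "RA_norm A (T_b A T (R z)) = norm (Eop z)"
proof -
  define x0 where "x0 = (SOME x. R x = R z)"
  have "\<exists>x. R x = R z" by blast
  then have "R x0 = R z" unfolding x0_def by (rule someI_ex)
  then have Px0: "P x0 = P z" by (rule P_eq_of_R)
  have "T_b A T (R z) = R (T x0)" by (simp add: T_b_def x0_def)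
  then have "RA_norm A (T_b A T (R z)) = norm (P (T x0))" by (simp add: RA_norm_R)
  also have "P (T x0) = Eop z" by (metis E_eq E_P Px0)
  finally show ?thesis .
qed

lemma RA_set_eq: "RA_opnorm_set A (T_b A T) = (\<lambda>z. norm (Eop z)) ` {z. norm (P z) = 1}"
  unfolding RA_opnorm_set_def
proof (intro equalityI subsetI)
  fix v assume "v \<in> (\<lambda>y. RA_norm A (T_b A T y)) ` {y \<in> range R. RA_norm A y = 1}"
  then obtain z where "v = RA_norm A (T_b A T (R z))" "RA_norm A (R z) = 1" by auto
  then show "v \<in> (\<lambda>z. norm (Eop z)) ` {z. norm (P z) = 1}"
    by (auto simp: Tb_val RA_norm_R)
next
  fix v assume "v \<in> (\<lambda>z. norm (Eop z)) ` {z. norm (P z) = 1}"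
  then obtain z where z: "v = norm (Eop z)" "norm (P z) = 1" by auto
  then have "R z \<in> {y \<in> range R. RA_norm A y = 1}" by (simp add: RA_norm_R)
  moreover have "v = RA_norm A (T_b A T (R z))" by (simp add: z Tb_val)
  ultimately show "v \<in> (\<lambda>y. RA_norm A (T_b A T y)) ` {y \<in> range R. RA_norm A y = 1}" by blast
qed

lemma ex_P1:
  assumes A0: "A \<noteq> (\<lambda>x. 0)"
  shows "\<exists>z. norm (P z) = 1"
proof -
  obtain x0 where x0: "A x0 \<noteq> 0" using A0 by auto
  define y where "y = scaleR (1 / norm (A x0)) (A x0)"
  have "A x0 \<in> M" by (rule subsetD[OF closure_subset]) simp
  then have "y \<in> M" unfolding y_def by (rule csubspace_scaleR[OF Mc.csub_M])
  then have "P y = y" by (rule P_id)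
  moreover have "norm y = 1" using x0 by (simp add: y_def)
  ultimately show ?thesis by metis
qed

lemma ex_R1:
  assumes A0: "A \<noteq> (\<lambda>x. 0)"
  shows "\<exists>u. u \<in> M \<and> norm (R u) = 1"
proof -
  obtain x0 where x0: "A x0 \<noteq> 0" using A0 by auto
  then have Rx0: "R x0 \<noteq> 0" using kerAR by blast
  define u where "u = scaleR (1 / norm (R x0)) (P x0)"
  have "u \<in> M" unfolding u_def by (rule csubspace_scaleR[OF Mc.csub_M P_in])
  moreover have "norm (R u) = 1"
    using Rx0 by (simp add: u_def cblinear_scaleR[OF Rc] RP)
  ultimately show ?thesis by blast
qed

lemma RA_part:
  assumes A0: "A \<noteq> (\<lambda>x. 0)"
  shows "bdd_above (RA_opnorm_set A (T_b A T)) \<and> RA_opnorm A (T_b A T) = N"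
proof -
  let ?S = "(\<lambda>z. norm (Eop z)) ` {z. norm (P z) = 1}"
  have ub: "norm (Eop z) \<le> N" if "norm (P z) = 1" for z
    using E_bound[of "P z"] that by (simp add: E_P)
  have bdd: "bdd_above ?S" using ub by (intro bdd_aboveI[where M=N]) auto
  have ne: "?S \<noteq> {}" using ex_P1[OF A0] by auto
  have le: "Sup ?S \<le> N" using ne ub by (auto intro: cSup_least)
  have ge: "N \<le> Sup ?S"
  proof (rule onorm_bound)
    obtain z where z: "norm (P z) = 1" using ex_P1[OF A0] by blast
    have "0 \<le> norm (Eop z)" by simp
    also have "\<dots> \<le> Sup ?S" using z bdd by (auto intro: cSup_upper)
    finally show S0: "0 \<le> Sup ?S" .
    fix x
    show "norm (Eop x) \<le> Sup ?S * norm x"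
    proof (cases "P x = 0")
      case True
      then have "Eop x = 0" using E_P[of x] cblinear_zero[OF Ec] by simp
      then show ?thesis using S0 by simp
    next
      case False
      then have nP: "norm (P x) > 0" by simp
      define u where "u = scaleR (1 / norm (P x)) x"
      have "norm (P u) = 1" using nP by (simp add: u_def cblinear_scaleR[OF Pc])
      then have "norm (Eop u) \<le> Sup ?S" using bdd by (auto intro: cSup_upper)
      moreover have "norm (Eop u) = norm (Eop x) / norm (P x)"
        using nP by (simp add: u_def cblinear_scaleR[OF Ec])
      ultimately have "norm (Eop x) \<le> Sup ?S * norm (P x)"
        using nP by (simp add: field_simps)
      also have "\<dots> \<le> Sup ?S * norm x" using S0 P_norm by (intro mult_left_mono) auto
      finally show ?thesis .
    qed
  qed
  show ?thesis using bdd le ge by (simp add: RA_set_eq RA_opnorm_def)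
qed

lemma A_part:
  assumes A0: "A \<noteq> (\<lambda>x. 0)"
  shows "A_opnorm A Dop = N"
proof -
  let ?X = "{x \<in> M. norm (R x) = 1}"
  let ?S = "(\<lambda>x. norm (R (Dop x))) ` ?X"
  have eq: "A_opnorm A Dop = Sup ?S"
    unfolding A_opnorm_def by (simp add: A_norm_eq)
  have ub: "norm (R (Dop x)) \<le> N" if "norm (R x) = 1" for x
    using RD_bound[of x] that by simp
  have bdd: "bdd_above ?S" using ub by (intro bdd_aboveI[where M=N]) auto
  have ne: "?S \<noteq> {}" using ex_R1[OF A0] by auto
  have le: "Sup ?S \<le> N" using ne ub by (auto intro: cSup_least)
  obtain u0 where u0: "u0 \<in> M" "norm (R u0) = 1" using ex_R1[OF A0] by blast
  have S0: "0 \<le> Sup ?S"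
  proof -
    have "0 \<le> norm (R (Dop u0))" by simp
    also have "\<dots> \<le> Sup ?S" using u0 bdd by (auto intro: cSup_upper)
    finally show ?thesis .
  qed
  have RDS: "norm (R (Dop x)) \<le> Sup ?S * norm (R x)" for x
  proof (cases "R x = 0")
    case True
    then have "R (Dop x) = 0" by (simp add: RD cblinear_zero[OF Tsc])
    then show ?thesis using True by simp
  next
    case False
    then have nR: "norm (R x) > 0" by simp
    define x' where "x' = scaleR (1 / norm (R x)) (P x)"
    have "x' \<in> M" unfolding x'_def by (rule csubspace_scaleR[OF Mc.csub_M P_in])
    moreover have "norm (R x') = 1"
      using nR by (simp add: x'_def cblinear_scaleR[OF Rc] RP)
    ultimately have "norm (R (Dop x')) \<le> Sup ?S" using bdd by (auto intro: cSup_upper)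
    moreover have "R (Dop x') = scaleR (1 / norm (R x)) (R (Dop x))"
      by (simp add: x'_def D_scaleR cblinear_scaleR[OF Rc] RD RP)
    ultimately have "norm (R (Dop x)) / norm (R x) \<le> Sup ?S" using nR by simp
    then show ?thesis using nR by (simp add: field_simps)
  qed
  have ge: "N \<le> Sup ?S"
  proof (rule onorm_bound[OF S0])
    fix u
    show "norm (Eop u) \<le> Sup ?S * norm u"
    proof (rule density[OF EM])
      show "0 \<le> Sup ?S * norm u" using S0 by simp
      fix x
      have "cmod (cinner (R x) (Eop u)) = cmod (cinner (R (Dop x)) u)" by (simp add: key2)
      also have "\<dots> \<le> norm (R (Dop x)) * norm u" by (rule Cauchy_Schwarz_c)
      also have "\<dots> \<le> Sup ?S * norm (R x) * norm u" using RDS by (intro mult_right_mono) auto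
      finally show "cmod (cinner (R x) (Eop u)) \<le> Sup ?S * norm u * norm (R x)"
        by (simp add: algebra_simps)
    qed
  qed
  show ?thesis using eq le ge by simp
qed

end

theorem mainTheorem5:
  fixes A T :: "'a::chilbert_space \<Rightarrow> 'a"
  assumes "positive_op A"
    and "A \<noteq> (\<lambda>x. 0)"
    and "T \<in> BA_half A"
  shows "bdd_above (RA_opnorm_set A (T_b A T))
         \<and> RA_opnorm A (T_b A T) = onorm (diamond A (diamond A T))
         \<and> onorm (diamond A (diamond A T)) = A_opnorm A (diamond A T)"
proof -
  interpret tsetting A T
    by unfold_locales (use assms in auto)
  show ?thesis
    using RA_part[OF assms(2)] A_part[OF assms(2)] by (simp add: diamond_T diamond_D)
qed

end
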